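(* Fix integers $1\le L\le D\le K$. The capacity of the JPLT-II problem (single-server private linear transformation with joint privacy under Model II) with $K$ messages, demand support size $D$ and demand dimension $L$ equals $\dfrac{L}{K-D+L}$. That is, every JPLT-II protocol, over any field $\mathbb{F}_q$ and any message length $N$, has rate at most $L/(K-D+L)$, and for every prime power $q\ge K$ there is a JPLT-II protocol achieving rate exactly $L/(K-D+L)$.
   Context: Setup. Let $q$ be a prime power, $N\ge 1$ an integer, $B=N\log_2 q$, and $1\le L\le D\le K$ integers. Let $\mathbb{W}$ be the set of all $D$-element subsets of $[K]=\{1,\dots,K\}$. Let $\mathbb{V}_I$ be the set of $L\times D$ matrices over $\mathbb{F}_q$ that are MDS (every $L\times L$ submatrix is invertible), and $\mathbb{V}_{II}$ the set of $L\times D$ matrices over $\mathbb{F}_q$ of rank $L$. A server stores messages $X_1,\dots,X_K\in\mathbb{F}_q^N$ (row vectors), which are independent and uniformly distributed; $X$ denotes the $K\times N$ matrix with rows $X_1,\dots,X_K$, and for $S\subseteq[K]$, $X_S$ is the submatrix of rows indexed by $S$ (in increasing order). For $W\in\mathbb{W}$ and an $L\times D$ matrix $V$, the demand is $Z^{[W,V]}=VX_W=UX$, where the global coefficient matrix $U$ is the $L\times K$ matrix whose columns indexed by $W$ (in increasing order) are the columns of $V$ and whose other columns are zero. The demand support $W$ is uniform on $\mathbb{W}$; the coefficient matrix $V$ is uniform on $\mathbb{V}_I$ (Model I) or on $\mathbb{V}_{II}$ (Model II); $W,V,X$ are mutually independent. The server knows $K,D,L$ and these distributions but not the realizations of $W,V$.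 Protocol. The user draws private randomness $R$ independent of $(W,V,X)$ and sends a query $Q=Q^{[W,V]}$ that is a function of $(W,V,R)$; the server returns an answer $A=A^{[W,V]}$ that is a deterministic function of $(Q,X)$. Recoverability: $H(Z^{[W,V]}\mid A,Q,W,V)=0$. Joint privacy: for every realization $\mathrm{Q}$ of the query with positive probability and every $\tilde W\in\mathbb{W}$, $\Pr(W=\tilde W\mid Q=\mathrm{Q})=1/\binom{K}{D}$. A JPLT-I (resp. JPLT-II) protocol is a protocol satisfying recoverability and joint privacy under Model I (resp. Model II). The rate of a protocol is $H(Z^{[W,V]})/H(A)=LB/H(A)$. The capacity is the supremum of rates over all such protocols and all field sizes $q$ (for fixed $K,D,L$). *)

theory Defs
  imports "HOL-Probability.Probability"
begin

(* Matrices are functions nat => nat => 'a, 0-indexed, zero outside their dimensions. *)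

definition supported :: "nat \<Rightarrow> nat \<Rightarrow> (nat \<Rightarrow> nat \<Rightarrow> 'a::zero) \<Rightarrow> bool" where
  "supported m n M \<longleftrightarrow> (\<forall>i j. \<not> (i < m \<and> j < n) \<longrightarrow> M i j = 0)"

definition mats :: "nat \<Rightarrow> nat \<Rightarrow> (nat \<Rightarrow> nat \<Rightarrow> 'a::zero) set" where
  "mats m n = {M. supported m n M}"

definition full_row_rank :: "nat \<Rightarrow> nat \<Rightarrow> (nat \<Rightarrow> nat \<Rightarrow> 'a::field) \<Rightarrow> bool" where
  "full_row_rank L D V \<longleftrightarrow>
     (\<forall>c :: nat \<Rightarrow> 'a. (\<forall>j<D. (\<Sum>i<L. c i * V i j) = 0) \<longrightarrow> (\<forall>i<L. c i = 0))"

definition V_II :: "nat \<Rightarrow> nat \<Rightarrow> (nat \<Rightarrow> nat \<Rightarrow> 'a::field) set" where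
  "V_II L D = {V \<in> mats L D. full_row_rank L D V}"

definition supports :: "nat \<Rightarrow> nat \<Rightarrow> nat set set" where
  "supports K D = {S. S \<subseteq> {0..<K} \<and> card S = D}"

(* demand Z = V X_W  (L x N), rows of X_W in increasing index order *)
definition demand :: "nat \<Rightarrow> nat \<Rightarrow> nat \<Rightarrow> nat set \<Rightarrow> (nat \<Rightarrow> nat \<Rightarrow> 'a::field)
    \<Rightarrow> (nat \<Rightarrow> nat \<Rightarrow> 'a) \<Rightarrow> (nat \<Rightarrow> nat \<Rightarrow> 'a)" where
  "demand L D N W V X = (\<lambda>i n. if i < L \<and> n < N then
      (\<Sum>j<D. V i j * X (sorted_list_of_set W ! j) n) else 0)"

definition entropy_pmf :: "'a pmf \<Rightarrow> ennreal" where
  "entropy_pmf p = (\<integral>\<^sup>+ x. ennreal (- pmf p x * log 2 (pmf p x)) \<partial>count_space UNIV)"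

(* conditional entropy H(Z | Y) for a joint distribution J of (Z, Y):
   sum over (z,y) of p(z,y) log2 (p(y) / p(z,y)) *)
definition cond_entropy_pmf :: "('a \<times> 'b) pmf \<Rightarrow> ennreal" where
  "cond_entropy_pmf J = (\<integral>\<^sup>+ zy. ennreal (pmf J zy *
       log 2 (pmf (map_pmf snd J) (snd zy) / pmf J zy)) \<partial>count_space UNIV)"

definition omega_II :: "nat \<Rightarrow> nat \<Rightarrow> nat \<Rightarrow> nat \<Rightarrow> 'r pmf
    \<Rightarrow> (nat set \<times> (nat \<Rightarrow> nat \<Rightarrow> 'a::{finite,field}) \<times> 'r \<times> (nat \<Rightarrow> nat \<Rightarrow> 'a)) pmf" where
  "omega_II K D L N \<rho> =
     bind_pmf (pmf_of_set (supports K D)) (\<lambda>W.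
     bind_pmf (pmf_of_set (V_II L D)) (\<lambda>V.
     bind_pmf \<rho> (\<lambda>R.
     bind_pmf (pmf_of_set (mats K N)) (\<lambda>X.
     return_pmf (W, V, R, X)))))"

(* A protocol: private randomness R ~ rho, query Q = qf W V R, answer A = af Q X *)
definition JPLT_II_protocol :: "nat \<Rightarrow> nat \<Rightarrow> nat \<Rightarrow> nat \<Rightarrow> 'r pmf
    \<Rightarrow> (nat set \<Rightarrow> (nat \<Rightarrow> nat \<Rightarrow> 'a::{finite,field}) \<Rightarrow> 'r \<Rightarrow> 'q)
    \<Rightarrow> ('q \<Rightarrow> (nat \<Rightarrow> nat \<Rightarrow> 'a) \<Rightarrow> 'b) \<Rightarrow> bool" where
  "JPLT_II_protocol K D L N \<rho> qf af \<longleftrightarrow>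
     (let \<Omega> = omega_II K D L N \<rho> in
       \<comment> \<open>recoverability: H(Z | A, Q, W, V) = 0\<close>
       cond_entropy_pmf (map_pmf (\<lambda>(W, V, R, X).
           (demand L D N W V X, af (qf W V R) X, qf W V R, W, V)) \<Omega>) = 0
     \<and> \<comment> \<open>joint privacy\<close>
       (\<forall>q. measure_pmf.prob \<Omega> {(W, V, R, X). qf W V R = q} > 0 \<longrightarrow>
          (\<forall>W' \<in> supports K D.
             measure_pmf.prob \<Omega> {(W, V, R, X). W = W' \<and> qf W V R = q}
               / measure_pmf.prob \<Omega> {(W, V, R, X). qf W V R = q}
             = 1 / real (K choose D))))"

(* rate = L B / H(A), with B = N log2 q *)
definition JPLT_II_rate :: "nat \<Rightarrow> nat \<Rightarrow> nat \<Rightarrow> nat \<Rightarrow> 'r pmf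
    \<Rightarrow> (nat set \<Rightarrow> (nat \<Rightarrow> nat \<Rightarrow> 'a::{finite,field}) \<Rightarrow> 'r \<Rightarrow> 'q)
    \<Rightarrow> ('q \<Rightarrow> (nat \<Rightarrow> nat \<Rightarrow> 'a) \<Rightarrow> 'b) \<Rightarrow> ennreal" where
  "JPLT_II_rate K D L N \<rho> qf af =
     ennreal (real L * (real N * log 2 (real CARD('a))))
     / entropy_pmf (map_pmf (\<lambda>(W, V, R, X). af (qf W V R) X) (omega_II K D L N \<rho>))"

end

theory Submission
  imports Defs "HOL-Library.Function_Algebras" "HOL-Computational_Algebra.Polynomial"
begin


definition vecs :: "nat \<Rightarrow> (nat \<Rightarrow> 'a::zero) set" where
  "vecs n = {x. \<forall>k\<ge>n. x k = 0}"

definition subsp :: "(nat \<Rightarrow> 'a::field) set \<Rightarrow> bool" where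
  "subsp E \<longleftrightarrow> 0 \<in> E \<and> (\<forall>x\<in>E. \<forall>y\<in>E. x + y \<in> E) \<and> (\<forall>c. \<forall>x\<in>E. (\<lambda>k. c * x k) \<in> E)"

definition piv :: "(nat \<Rightarrow> 'a) set \<Rightarrow> nat set \<Rightarrow> bool" where
  "piv E P \<longleftrightarrow> (\<forall>g. \<exists>x\<in>E. \<forall>p\<in>P. x p = g p) \<and> (\<forall>x\<in>E. \<forall>y\<in>E. (\<forall>p\<in>P. x p = y p) \<longrightarrow> x = y)"

lemma pivE: "piv E P \<Longrightarrow> \<exists>x\<in>E. \<forall>p\<in>P. x p = g p"
  unfolding piv_def by blast

lemma pivU: "piv E P \<Longrightarrow> x \<in> E \<Longrightarrow> y \<in> E \<Longrightarrow> (\<And>p. p \<in> P \<Longrightarrow> x p = y p) \<Longrightarrow> x = y"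
  unfolding piv_def by blast

lemma subsp_zero: "subsp E \<Longrightarrow> 0 \<in> E" unfolding subsp_def by blast
lemma subsp_add: "subsp E \<Longrightarrow> x \<in> E \<Longrightarrow> y \<in> E \<Longrightarrow> x + y \<in> E" unfolding subsp_def by blast
lemma subsp_smult: "subsp E \<Longrightarrow> x \<in> E \<Longrightarrow> (\<lambda>k. c * x k) \<in> E" unfolding subsp_def by blast

lemma subsp_diff:
  assumes "subsp E" "x \<in> E" "y \<in> E" shows "x - y \<in> E"
proof -
  have "(\<lambda>k. (-1) * y k) \<in> E" using assms subsp_smult by blast
  then have "x + (\<lambda>k. (-1) * y k) \<in> E" using assms subsp_add by blast
  moreover have "x + (\<lambda>k. (-1) * y k) = x - y" by (auto simp: fun_eq_iff)
  ultimately show ?thesis by simp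
qed

lemma pivot_exists:
  fixes E :: "(nat \<Rightarrow> 'a::field) set"
  assumes "subsp E" "E \<subseteq> vecs n"
  shows "\<exists>P \<subseteq> {0..<n}. piv E P"
  using assms
proof (induction n arbitrary: E)
  case 0
  have "E \<subseteq> {0}" using 0 unfolding vecs_def by (auto simp: fun_eq_iff)
  then have "E = {0}" using subsp_zero[OF 0(1)] by blast
  then have "piv E {}" unfolding piv_def by simp
  then show ?case by (intro exI[of _ "{}"]) simp
next
  case (Suc n)
  define E0 where "E0 = {x\<in>E. x n = 0}"
  have s0: "subsp E0" using Suc.prems(1) unfolding E0_def subsp_def by auto
  have v0: "E0 \<subseteq> vecs n"
  proof
    fix x assume x: "x \<in> E0"
    then have "x \<in> vecs (Suc n)" "x n = 0" using Suc.prems unfolding E0_def by auto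
    then show "x \<in> vecs n" unfolding vecs_def
    proof (intro CollectI allI impI)
      fix k assume k: "n \<le> k" and h: "x \<in> {x. \<forall>k\<ge>Suc n. x k = 0}" "x n = 0"
      show "x k = 0"
      proof (cases "k = n")
        case True then show ?thesis using h by simp
      next
        case False then have "Suc n \<le> k" using k by simp
        then show ?thesis using h by simp
      qed
    qed
  qed
  obtain P0 where P0: "P0 \<subseteq> {0..<n}" "piv E0 P0"
    using Suc.IH[OF s0 v0] by blast
  show ?case
  proof (cases "\<forall>x\<in>E. x n = 0")
    case True
    then have "E0 = E" unfolding E0_def by auto
    then show ?thesis using P0 by (intro exI[of _ P0]) auto
  next
    case False
    then obtain u0 where u0: "u0 \<in> E" "u0 n \<noteq> 0" by auto
    define u where "u = (\<lambda>k. inverse (u0 n) * u0 k)"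
    have uE: "u \<in> E" using u0 subsp_smult[OF Suc.prems(1)] unfolding u_def by blast
    have un: "u n = 1" using u0 unfolding u_def by simp
    have sub: "insert n P0 \<subseteq> {0..<Suc n}" using P0 by auto
    have ex: "\<exists>x\<in>E. \<forall>p\<in>insert n P0. x p = g p" for g
    proof -
      obtain e where e: "e \<in> E0" "\<forall>p\<in>P0. e p = g p - g n * u p"
        using pivE[OF P0(2), of "\<lambda>k. g k - g n * u k"] by blast
      define x where "x = e + (\<lambda>k. g n * u k)"
      have xE: "x \<in> E" using e uE subsp_add[OF Suc.prems(1)] subsp_smult[OF Suc.prems(1)]
        unfolding x_def E0_def by blast
      have xg: "\<forall>p\<in>insert n P0. x p = g p"
        using e un unfolding x_def E0_def by auto
      show ?thesis using xE xg by blast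
    qed
    have un2: "x = y" if "x \<in> E" "y \<in> E" "\<forall>p\<in>insert n P0. x p = y p" for x y
    proof -
      have d: "y - x \<in> E" using subsp_diff[OF Suc.prems(1)] that by blast
      have dE0: "y - x \<in> E0" using d that unfolding E0_def by auto
      have zE0: "0 \<in> E0" using subsp_zero[OF s0] .
      have "y - x = 0" by (rule pivU[OF P0(2) dE0 zE0]) (use that in auto)
      then show "x = y" by simp
    qed
    have "piv E (insert n P0)" unfolding piv_def using ex un2 by blast
    then show ?thesis using sub by blast
  qed
qed

lemma card_piv:
  fixes S :: "(nat \<Rightarrow> 'a::finite) set"
  assumes P: "finite P" and u: "piv S P"
  shows "finite S \<and> card S = CARD('a) ^ card P"
proof -
  have bij: "bij_betw (\<lambda>x. restrict x P) S (PiE P (\<lambda>_. UNIV))"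
  proof (rule bij_betwI')
    fix x y assume xy: "x \<in> S" "y \<in> S"
    show "(restrict x P = restrict y P) = (x = y)"
    proof
      assume r: "restrict x P = restrict y P"
      have a: "x p = y p" if "p \<in> P" for p using r that by (metis restrict_apply')
      show "x = y" by (rule pivU[OF u xy a])
    qed simp
  next
    fix x assume "x \<in> S" then show "restrict x P \<in> PiE P (\<lambda>_. UNIV)" by simp
  next
    fix g assume g: "g \<in> PiE P (\<lambda>_. UNIV :: 'a set)"
    obtain x where x: "x \<in> S" "\<forall>p\<in>P. x p = g p" using pivE[OF u, of g] by blast
    have "restrict x P = g" using x g by (auto simp: fun_eq_iff PiE_def extensional_def)
    then show "\<exists>x\<in>S. g = restrict x P" using x by blast
  qed
  have fin: "finite (PiE P (\<lambda>_. UNIV :: 'a set))" using P by (simp add: finite_PiE)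
  have "finite S" using bij_betw_finite[OF bij] fin by simp
  moreover have "card S = card (PiE P (\<lambda>_. UNIV :: 'a set))" using bij_betw_same_card[OF bij] .
  ultimately show ?thesis using P by (simp add: card_PiE)
qed

lemma vecs_piv: "piv (vecs n) {0..<n}"
  unfolding piv_def
proof (intro conjI allI ballI impI)
  fix g :: "nat \<Rightarrow> 'a"
  show "\<exists>x\<in>vecs n. \<forall>p\<in>{0..<n}. x p = g p"
    by (rule bexI[of _ "\<lambda>k. if k < n then g k else 0"]) (auto simp: vecs_def)
next
  fix x y :: "nat \<Rightarrow> 'a" assume xy: "x \<in> vecs n" "y \<in> vecs n" "\<forall>p\<in>{0..<n}. x p = y p"
  show "x = y"
  proof
    fix k show "x k = y k" using xy unfolding vecs_def by (cases "k < n") auto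
  qed
qed

lemma card_vecs: "finite (vecs n :: (nat \<Rightarrow> 'a::{finite,zero}) set) \<and> card (vecs n :: (nat \<Rightarrow> 'a) set) = CARD('a) ^ n"
  using card_piv[OF _ vecs_piv, of n] by simp

lemma sub_piv:
  fixes E :: "(nat \<Rightarrow> 'a::field) set"
  assumes u: "piv E P" and sub: "P' \<subseteq> P"
  shows "piv {x\<in>E. \<forall>p\<in>P-P'. x p = 0} P'"
  unfolding piv_def
proof (intro conjI allI ballI impI)
  fix g :: "nat \<Rightarrow> 'a"
  obtain x where x: "x \<in> E" "\<forall>p\<in>P. x p = (if p \<in> P' then g p else 0)"
    using pivE[OF u, of "\<lambda>p. if p \<in> P' then g p else 0"] by blast
  show "\<exists>x\<in>{x\<in>E. \<forall>p\<in>P-P'. x p = 0}. \<forall>p\<in>P'. x p = g p"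
    using x sub by (intro bexI[of _ x]) auto
next
  fix x y assume xy: "x \<in> {x\<in>E. \<forall>p\<in>P-P'. x p = 0}" "y \<in> {x\<in>E. \<forall>p\<in>P-P'. x p = 0}"
     "\<forall>p\<in>P'. x p = y p"
  show "x = y"
  proof (rule pivU[OF u])
    show "x \<in> E" "y \<in> E" using xy by auto
    fix p assume "p \<in> P" then show "x p = y p" using xy by (cases "p \<in> P'") auto
  qed
qed

lemma card_field_ge2: "2 \<le> CARD('a::{finite,field})"
proof -
  have "{0, 1} \<subseteq> (UNIV :: 'a set)" by simp
  then have "card {0::'a, 1} \<le> CARD('a)" by (intro card_mono) simp_all
  then show ?thesis by simp
qed


lemma card_mats: "finite (mats m n :: (nat \<Rightarrow> nat \<Rightarrow> 'a::{finite,zero}) set) \<and>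
    card (mats m n :: (nat \<Rightarrow> nat \<Rightarrow> 'a) set) = CARD('a) ^ (m * n)"
proof -
  let ?S = "{0..<m} \<times> {0..<n}"
  have bij: "bij_betw (\<lambda>M. restrict (\<lambda>(i,j). M i j) ?S) (mats m n :: (nat \<Rightarrow> nat \<Rightarrow> 'a) set) (PiE ?S (\<lambda>_. UNIV))"
  proof (rule bij_betwI')
    fix x y :: "nat \<Rightarrow> nat \<Rightarrow> 'a" assume xy: "x \<in> mats m n" "y \<in> mats m n"
    show "(restrict (\<lambda>(i,j). x i j) ?S = restrict (\<lambda>(i,j). y i j) ?S) = (x = y)"
    proof
      assume r: "restrict (\<lambda>(i,j). x i j) ?S = restrict (\<lambda>(i,j). y i j) ?S"
      show "x = y"
      proof (intro ext)
        fix i j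
        show "x i j = y i j"
        proof (cases "i < m \<and> j < n")
          case True
          then have "(i,j) \<in> ?S" by simp
          then show ?thesis using fun_cong[OF r, of "(i,j)"] by simp
        next
          case False
          then show ?thesis using xy unfolding mats_def supported_def by auto
        qed
      qed
    qed simp
  next
    fix x :: "nat \<Rightarrow> nat \<Rightarrow> 'a" show "restrict (\<lambda>(i,j). x i j) ?S \<in> PiE ?S (\<lambda>_. UNIV)" by simp
  next
    fix g assume g: "g \<in> PiE ?S (\<lambda>_. UNIV :: 'a set)"
    define x where "x = (\<lambda>i j. if i < m \<and> j < n then g (i,j) else (0::'a))"
    have "x \<in> mats m n" unfolding x_def mats_def supported_def by auto
    moreover have "restrict (\<lambda>(i,j). x i j) ?S = g"
      using g by (auto simp: fun_eq_iff PiE_def extensional_def x_def)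
    ultimately show "\<exists>x\<in>mats m n. g = restrict (\<lambda>(i,j). x i j) ?S" by metis
  qed
  have fin: "finite (PiE ?S (\<lambda>_. UNIV :: 'a set))" by (simp add: finite_PiE)
  have "finite (mats m n :: (nat \<Rightarrow> nat \<Rightarrow> 'a) set)" using bij_betw_finite[OF bij] fin by simp
  moreover have "card (mats m n :: (nat \<Rightarrow> nat \<Rightarrow> 'a) set) = card (PiE ?S (\<lambda>_. UNIV :: 'a set))"
    using bij_betw_same_card[OF bij] .
  ultimately show ?thesis by (simp add: card_PiE card_cartesian_product)
qed

lemma nullity:
  fixes V :: "nat \<Rightarrow> nat \<Rightarrow> 'a::{finite,field}"
  assumes Vm: "V \<in> mats L D" and fr: "full_row_rank L D V"
  shows "card {x \<in> vecs D. \<forall>i<L. (\<Sum>j<D. V i j * x j) = 0} \<le> CARD('a) ^ (D - L)"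
proof -
  define \<phi> where "\<phi> c = (\<lambda>j. \<Sum>i<L. c i * V i j)" for c :: "nat \<Rightarrow> 'a"
  define R where "R = \<phi> ` vecs L"
  have sR: "subsp R" unfolding subsp_def
  proof (intro conjI ballI allI)
    have "\<phi> 0 = 0" unfolding \<phi>_def by (simp add: fun_eq_iff)
    moreover have "(0::nat\<Rightarrow>'a) \<in> vecs L" unfolding vecs_def by simp
    ultimately show "0 \<in> R" unfolding R_def by (metis image_eqI)
  next
    fix x y assume "x \<in> R" "y \<in> R"
    then obtain c d where cd: "c \<in> vecs L" "d \<in> vecs L" "x = \<phi> c" "y = \<phi> d" unfolding R_def by blast
    have "c + d \<in> vecs L" using cd unfolding vecs_def by simp
    moreover have "x + y = \<phi> (c + d)" using cd unfolding \<phi>_def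
      by (simp add: fun_eq_iff distrib_right sum.distrib)
    ultimately show "x + y \<in> R" unfolding R_def by blast
  next
    fix a x assume "x \<in> R"
    then obtain c where c: "c \<in> vecs L" "x = \<phi> c" unfolding R_def by blast
    have "(\<lambda>i. a * c i) \<in> vecs L" using c unfolding vecs_def by simp
    moreover have "(\<lambda>k. a * x k) = \<phi> (\<lambda>i. a * c i)" using c unfolding \<phi>_def
      by (simp add: fun_eq_iff sum_distrib_left mult.assoc)
    ultimately show "(\<lambda>k. a * x k) \<in> R" unfolding R_def by blast
  qed
  have RV: "R \<subseteq> vecs D"
  proof
    fix x assume "x \<in> R"
    then obtain c where c: "x = \<phi> c" unfolding R_def by blast
    show "x \<in> vecs D" unfolding vecs_def c \<phi>_def
      using Vm unfolding mats_def supported_def by auto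
  qed
  obtain PR where PR: "PR \<subseteq> {0..<D}" "piv R PR" using pivot_exists[OF sR RV] by blast
  have finPR: "finite PR" using PR(1) finite_subset by blast
  have cR: "card R = CARD('a) ^ card PR" using card_piv[OF finPR PR(2)] by simp
  have inj: "inj_on \<phi> (vecs L)"
  proof (rule inj_onI)
    fix c d assume cd: "c \<in> vecs L" "d \<in> vecs L" "\<phi> c = \<phi> d"
    have "\<forall>j<D. (\<Sum>i<L. (c i - d i) * V i j) = 0"
    proof (intro allI impI)
      fix j assume "j < D"
      have "(\<Sum>i<L. (c i - d i) * V i j) = \<phi> c j - \<phi> d j"
        unfolding \<phi>_def by (simp add: left_diff_distrib sum_subtractf)
      then show "(\<Sum>i<L. (c i - d i) * V i j) = 0" using cd by simp
    qed
    then have z: "\<forall>i<L. c i - d i = 0"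
      using fr[unfolded full_row_rank_def, rule_format, of "\<lambda>i. c i - d i"] by blast
    show "c = d"
    proof
      fix i show "c i = d i" using z cd unfolding vecs_def by (cases "i < L") auto
    qed
  qed
  have "card R = card (vecs L :: (nat \<Rightarrow> 'a) set)" unfolding R_def by (rule card_image[OF inj])
  then have "card R = CARD('a) ^ L" using card_vecs[of L, where 'a='a] by simp
  then have cPR: "card PR = L" using cR card_field_ge2[where 'a='a]
    by (metis power_inject_exp Suc_1 Suc_le_lessD)
  define Null where "Null = {x \<in> vecs D. \<forall>i<L. (\<Sum>j<D. V i j * x j) = 0}"
  define C where "C = {0..<D} - PR"
  have injN: "inj_on (\<lambda>x. restrict x C) Null"
  proof (rule inj_onI)
    fix x y assume xy: "x \<in> Null" "y \<in> Null" "restrict x C = restrict y C"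
    define d where "d = x - y"
    have dC: "d j = 0" if "j \<in> C" for j
      using fun_cong[OF xy(3), of j] that unfolding d_def by simp
    have dnull: "(\<Sum>j<D. V i j * d j) = 0" if "i < L" for i
    proof -
      have "(\<Sum>j<D. V i j * d j) = (\<Sum>j<D. V i j * x j) - (\<Sum>j<D. V i j * y j)"
        unfolding d_def by (simp add: right_diff_distrib sum_subtractf)
      then show ?thesis using xy that unfolding Null_def by simp
    qed
    have dP: "d p = 0" if p: "p \<in> PR" for p
    proof -
      obtain r where r: "r \<in> R" "\<forall>p'\<in>PR. r p' = (if p' = p then 1 else 0)"
        using pivE[OF PR(2), of "\<lambda>p'. if p' = p then 1 else 0"] by blast
      obtain c where c: "r = \<phi> c" using r(1) unfolding R_def by blast
      have "(\<Sum>j<D. r j * d j) = (\<Sum>j<D. (\<Sum>i<L. c i * V i j) * d j)" unfolding c \<phi>_def by simp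
      also have "\<dots> = (\<Sum>j<D. \<Sum>i<L. c i * (V i j * d j))" by (simp add: sum_distrib_right mult.assoc)
      also have "\<dots> = (\<Sum>i<L. \<Sum>j<D. c i * (V i j * d j))" by (rule sum.swap)
      also have "\<dots> = (\<Sum>i<L. c i * (\<Sum>j<D. V i j * d j))" by (simp add: sum_distrib_left)
      also have "\<dots> = 0" using dnull by simp
      finally have s0: "(\<Sum>j<D. r j * d j) = 0" .
      have "\<forall>j\<in>{..<D}. r j * d j = (if j = p then d j else 0)"
      proof
        fix j assume "j \<in> {..<D}"
        show "r j * d j = (if j = p then d j else 0)"
        proof (cases "j \<in> PR")
          case True then show ?thesis using r(2) by auto
        next
          case False
          then have "j \<in> C" using \<open>j \<in> {..<D}\<close> unfolding C_def by auto
          then show ?thesis using dC False p by auto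
        qed
      qed
      then have "(\<Sum>j<D. r j * d j) = (\<Sum>j<D. if j = p then d j else 0)" by (intro sum.cong) auto
      also have "\<dots> = d p" using p PR(1) by (auto simp: sum.delta)
      finally show ?thesis using s0 by simp
    qed
    show "x = y"
    proof
      fix k
      show "x k = y k"
      proof (cases "k < D")
        case True
        then have "d k = 0" using dP dC unfolding C_def by (cases "k \<in> PR") auto
        then show ?thesis unfolding d_def by simp
      next
        case False then show ?thesis using xy unfolding Null_def vecs_def by auto
      qed
    qed
  qed
  have img: "(\<lambda>x. restrict x C) ` Null \<subseteq> PiE C (\<lambda>_. UNIV)" by auto
  have finC: "finite C" unfolding C_def by simp
  have "card Null \<le> card (PiE C (\<lambda>_. UNIV :: 'a set))"
    using card_inj_on_le[OF injN img] finC by (simp add: finite_PiE)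
  also have "\<dots> = CARD('a) ^ card C" using finC by (simp add: card_PiE)
  also have "card C = D - L" unfolding C_def using PR(1) finPR cPR by (simp add: card_Diff_subset)
  finally show ?thesis unfolding Null_def .
qed


lemma sorted_W:
  assumes "W \<in> supports K D"
  shows "finite W" "length (sorted_list_of_set W) = D" "set (sorted_list_of_set W) = W"
    "\<And>j. j < D \<Longrightarrow> sorted_list_of_set W ! j \<in> W"
    "\<And>p. p \<in> W \<Longrightarrow> \<exists>j<D. sorted_list_of_set W ! j = p"
proof -
  have fW: "finite W" using assms unfolding supports_def by (auto intro: finite_subset)
  show "finite W" by (rule fW)
  have l: "length (sorted_list_of_set W) = D" using assms fW unfolding supports_def by simp
  show "length (sorted_list_of_set W) = D" by (rule l)
  have s: "set (sorted_list_of_set W) = W" using fW by simp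
  show "set (sorted_list_of_set W) = W" by (rule s)
  fix j assume "j < D" then show "sorted_list_of_set W ! j \<in> W" using l s by (metis nth_mem)
next
  fix p assume "p \<in> W"
  have fW: "finite W" using assms unfolding supports_def by (auto intro: finite_subset)
  have l: "length (sorted_list_of_set W) = D" using assms fW unfolding supports_def by simp
  have s: "set (sorted_list_of_set W) = W" using fW by simp
  show "\<exists>j<D. sorted_list_of_set W ! j = p" using \<open>p \<in> W\<close> l s by (metis in_set_conv_nth)
qed

lemma E_bound:
  fixes Vs :: "nat set \<Rightarrow> nat \<Rightarrow> nat \<Rightarrow> 'a::{finite,field}"
  assumes L1: "1 \<le> L" "L \<le> D" "D \<le> K"
    and VW: "\<And>W. W \<in> supports K D \<Longrightarrow> Vs W \<in> mats L D \<and> full_row_rank L D (Vs W)"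
  shows "card {\<delta> \<in> vecs K. \<forall>W\<in>supports K D. \<forall>i<L. (\<Sum>j<D. Vs W i j * \<delta> (sorted_list_of_set W ! j)) = 0}
          \<le> CARD('a) ^ (D - L)"
proof -
  define E where "E = {\<delta> \<in> vecs K. \<forall>W\<in>supports K D. \<forall>i<L. (\<Sum>j<D. Vs W i j * \<delta> (sorted_list_of_set W ! j)) = 0}"
  have sE: "subsp E" unfolding subsp_def
  proof (intro conjI ballI allI)
    show "0 \<in> E" unfolding E_def vecs_def by simp
  next
    fix x y assume xy: "x \<in> E" "y \<in> E"
    show "x + y \<in> E" unfolding E_def
    proof (intro CollectI conjI ballI allI impI)
      show "x + y \<in> vecs K" using xy unfolding E_def vecs_def by simp
      fix W i assume W: "W \<in> supports K D" and i: "i < L"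
      have "(\<Sum>j<D. Vs W i j * (x + y) (sorted_list_of_set W ! j)) =
            (\<Sum>j<D. Vs W i j * x (sorted_list_of_set W ! j)) + (\<Sum>j<D. Vs W i j * y (sorted_list_of_set W ! j))"
        by (simp add: distrib_left sum.distrib)
      then show "(\<Sum>j<D. Vs W i j * (x + y) (sorted_list_of_set W ! j)) = 0" using xy W i unfolding E_def by simp
    qed
  next
    fix c x assume x: "x \<in> E"
    show "(\<lambda>k. c * x k) \<in> E" unfolding E_def
    proof (intro CollectI conjI ballI allI impI)
      show "(\<lambda>k. c * x k) \<in> vecs K" using x unfolding E_def vecs_def by simp
      fix W i assume W: "W \<in> supports K D" and i: "i < L"
      have "(\<Sum>j<D. Vs W i j * (c * x (sorted_list_of_set W ! j))) =
            c * (\<Sum>j<D. Vs W i j * x (sorted_list_of_set W ! j))"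
        by (simp add: sum_distrib_left mult.left_commute)
      then show "(\<Sum>j<D. Vs W i j * (c * x (sorted_list_of_set W ! j))) = 0" using x W i unfolding E_def by simp
    qed
  qed
  have EV: "E \<subseteq> vecs K" unfolding E_def by blast
  obtain P where P: "P \<subseteq> {0..<K}" "piv E P" using pivot_exists[OF sE EV] by blast
  have finP: "finite P" using P(1) finite_subset by blast
  define t where "t = card P"
  have cE: "card E = CARD('a) ^ t" using card_piv[OF finP P(2)] unfolding t_def by simp
  obtain P' where P': "P' \<subseteq> P" "card P' = min t D"
    using obtain_subset_with_card_n[of "min t D" P] unfolding t_def by auto
  have finP': "finite P'" using P'(1) finP finite_subset by blast
  have P'K: "P' \<subseteq> {0..<K}" using P'(1) P(1) by blast
  have "card ({0..<K} - P') = K - card P'" using P'K finP' by (simp add: card_Diff_subset)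
  then have "D - card P' \<le> card ({0..<K} - P')" using L1 by simp
  then obtain Q where Q: "Q \<subseteq> {0..<K} - P'" "card Q = D - card P'"
    using obtain_subset_with_card_n by metis
  define W where "W = P' \<union> Q"
  have finQ: "finite Q" using Q(1) finite_subset by blast
  have "card W = card P' + card Q" unfolding W_def using Q(1) finP' finQ by (subst card_Un_disjoint) auto
  then have cW: "card W = D" using Q(2) P'(2) by simp
  have WK: "W \<subseteq> {0..<K}" unfolding W_def using P'K Q(1) by blast
  have Ws: "W \<in> supports K D" unfolding supports_def using WK cW by simp
  have P'W: "P' \<subseteq> W" unfolding W_def by blast
  define E' where "E' = {x\<in>E. \<forall>p\<in>P-P'. x p = 0}"
  have pE': "piv E' P'" unfolding E'_def by (rule sub_piv[OF P(2) P'(1)])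
  have cE': "card E' = CARD('a) ^ card P'" using card_piv[OF finP' pE'] by simp
  define V where "V = Vs W"
  have Vm: "V \<in> mats L D" and Vf: "full_row_rank L D V" using VW[OF Ws] unfolding V_def by auto
  define ws where "ws = sorted_list_of_set W"
  define \<psi> where "\<psi> \<delta> = (\<lambda>j. if j < D then \<delta> (ws ! j) else 0)" for \<delta> :: "nat \<Rightarrow> 'a"
  define Null where "Null = {x \<in> vecs D. \<forall>i<L. (\<Sum>j<D. V i j * x j) = 0}"
  have img: "\<psi> ` E' \<subseteq> Null"
  proof
    fix y assume "y \<in> \<psi> ` E'"
    then obtain \<delta> where \<delta>: "\<delta> \<in> E'" "y = \<psi> \<delta>" by blast
    have "\<forall>i<L. (\<Sum>j<D. V i j * \<delta> (ws ! j)) = 0" using \<delta>(1) Ws unfolding E'_def E_def V_def ws_def by blast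
    moreover have "(\<Sum>j<D. V i j * y j) = (\<Sum>j<D. V i j * \<delta> (ws ! j))" for i
      unfolding \<delta>(2) \<psi>_def by (intro sum.cong) auto
    moreover have "y \<in> vecs D" unfolding \<delta>(2) \<psi>_def vecs_def by simp
    ultimately show "y \<in> Null" unfolding Null_def by simp
  qed
  have inj: "inj_on \<psi> E'"
  proof (rule inj_onI)
    fix x y assume xy: "x \<in> E'" "y \<in> E'" "\<psi> x = \<psi> y"
    have d: "x - y \<in> E" using subsp_diff[OF sE] xy unfolding E'_def by blast
    have z: "0 \<in> E" by (rule subsp_zero[OF sE])
    have "x - y = 0"
    proof (rule pivU[OF P(2) d z])
      fix p assume p: "p \<in> P"
      show "(x - y) p = 0 p"
      proof (cases "p \<in> P'")
        case True
        then have "p \<in> W" using P'W by blast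
        then obtain j where j: "j < D" "ws ! j = p" using sorted_W(5)[OF Ws] unfolding ws_def by blast
        have "\<psi> x j = \<psi> y j" using xy(3) by simp
        then have "x p = y p" using j unfolding \<psi>_def by simp
        then show ?thesis by simp
      next
        case False
        then show ?thesis using p xy unfolding E'_def by simp
      qed
    qed
    then show "x = y" by simp
  qed
  have finN: "finite Null" unfolding Null_def
    by (rule finite_subset[OF _ conjunct1[OF card_vecs[of D, where 'a='a]]]) blast
  have "card E' \<le> card Null" by (rule card_inj_on_le[OF inj img finN])
  also have "\<dots> \<le> CARD('a) ^ (D - L)" unfolding Null_def by (rule nullity[OF Vm Vf])
  finally have "CARD('a) ^ min t D \<le> CARD('a) ^ (D - L)" using cE' P'(2) by simp
  then have "min t D \<le> D - L" using card_field_ge2[where 'a='a] power_le_imp_le_exp[of "CARD('a)" "min t D" "D - L"] by linarith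
  then have "t \<le> D - L" using L1 by (cases "t \<le> D") (simp_all add: min_def)
  then have "CARD('a) ^ t \<le> CARD('a) ^ (D - L)" using card_field_ge2[where 'a='a] power_increasing[of t "D - L" "CARD('a)"] by linarith
  then show ?thesis using cE unfolding E_def by simp
qed

lemma fiber_bound:
  fixes f :: "(nat \<Rightarrow> nat \<Rightarrow> 'a::{finite,field}) \<Rightarrow> 'b"
    and Vs :: "nat set \<Rightarrow> nat \<Rightarrow> nat \<Rightarrow> 'a"
  assumes L1: "1 \<le> L" "L \<le> D" "D \<le> K"
    and VW: "\<And>W. W \<in> supports K D \<Longrightarrow> Vs W \<in> mats L D \<and> full_row_rank L D (Vs W)"
    and rec: "\<And>W X X'. W \<in> supports K D \<Longrightarrow> X \<in> mats K N \<Longrightarrow> X' \<in> mats K N \<Longrightarrow> f X = f X' \<Longrightarrow>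
                demand L D N W (Vs W) X = demand L D N W (Vs W) X'"
  shows "card {X \<in> mats K N. f X = a} \<le> CARD('a) ^ ((D - L) * N)"
proof (cases "{X \<in> mats K N. f X = a} = {}")
  case True then show ?thesis by (simp only: True card.empty)
next
  case False
  then obtain X0 where X0: "X0 \<in> mats K N" "f X0 = a" by blast
  define E where "E = {\<delta> \<in> vecs K. \<forall>W\<in>supports K D. \<forall>i<L. (\<Sum>j<D. Vs W i j * \<delta> (sorted_list_of_set W ! j)) = 0}"
  have cE: "card E \<le> CARD('a) ^ (D - L)" unfolding E_def by (rule E_bound[OF L1 VW])
  have finE: "finite E" unfolding E_def
    by (rule finite_subset[OF _ conjunct1[OF card_vecs[of K, where 'a='a]]]) blast
  define chi where "chi X = restrict (\<lambda>n. \<lambda>k. X k n - X0 k n) {0..<N}" for X :: "nat \<Rightarrow> nat \<Rightarrow> 'a"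
  define F where "F = {X \<in> mats K N. f X = a}"
  have img: "chi ` F \<subseteq> PiE {0..<N} (\<lambda>_. E)"
  proof
    fix y assume "y \<in> chi ` F"
    then obtain X where X: "X \<in> F" "y = chi X" by blast
    have col: "(\<lambda>k. X k n - X0 k n) \<in> E" if n: "n < N" for n
      unfolding E_def
    proof (intro CollectI conjI ballI allI impI)
      have XF: "X \<in> mats K N" "f X = f X0" using X(1) X0(2) unfolding F_def by auto
      show "(\<lambda>k. X k n - X0 k n) \<in> vecs K" unfolding vecs_def
      proof (intro CollectI allI impI)
        fix k assume k: "K \<le> k"
        have "X k n = 0" using XF(1) k unfolding mats_def supported_def by simp
        moreover have "X0 k n = 0" using X0(1) k unfolding mats_def supported_def by simp
        ultimately show "X k n - X0 k n = 0" by simp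
      qed
      fix W i assume W: "W \<in> supports K D" and i: "i < L"
      have "demand L D N W (Vs W) X = demand L D N W (Vs W) X0" by (rule rec[OF W XF(1) X0(1) XF(2)])
      then have "demand L D N W (Vs W) X i n = demand L D N W (Vs W) X0 i n" by simp
      then have e: "(\<Sum>j<D. Vs W i j * X (sorted_list_of_set W ! j) n) = (\<Sum>j<D. Vs W i j * X0 (sorted_list_of_set W ! j) n)"
        using i n unfolding demand_def by simp
      have "(\<Sum>j<D. Vs W i j * (X (sorted_list_of_set W ! j) n - X0 (sorted_list_of_set W ! j) n)) =
        (\<Sum>j<D. Vs W i j * X (sorted_list_of_set W ! j) n) - (\<Sum>j<D. Vs W i j * X0 (sorted_list_of_set W ! j) n)"
        by (simp add: right_diff_distrib sum_subtractf)
      then show "(\<Sum>j<D. Vs W i j * (X (sorted_list_of_set W ! j) n - X0 (sorted_list_of_set W ! j) n)) = 0"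
        using e by simp
    qed
    show "y \<in> PiE {0..<N} (\<lambda>_. E)" unfolding X(2) chi_def using col by auto
  qed
  have inj: "inj_on chi F"
  proof (rule inj_onI)
    fix X Y assume XY: "X \<in> F" "Y \<in> F" "chi X = chi Y"
    show "X = Y"
    proof (intro ext)
      fix k n
      show "X k n = Y k n"
      proof (cases "n < N")
        case True
        have "chi X n k = chi Y n k" using XY(3) by simp
        then show ?thesis using True unfolding chi_def by simp
      next
        case False
        then show ?thesis using XY(1,2) unfolding F_def mats_def supported_def by auto
      qed
    qed
  qed
  have "card F \<le> card (PiE {0..<N} (\<lambda>_. E))"
    using card_inj_on_le[OF inj img] finE by (simp add: finite_PiE)
  also have "\<dots> = card E ^ N" by (simp add: card_PiE)
  also have "\<dots> \<le> (CARD('a) ^ (D - L)) ^ N" by (rule power_mono[OF cE]) simp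
  also have "\<dots> = CARD('a) ^ ((D - L) * N)" by (simp add: power_mult)
  finally show ?thesis unfolding F_def .
qed



lemma supports_fin: "finite (supports K D)"
  unfolding supports_def by (rule finite_subset[of _ "Pow {0..<K}"]) auto

lemma supports_card: "card (supports K D) = K choose D"
  unfolding supports_def using n_subsets[of "{0..<K}" D] by simp

lemma supports_ne: assumes "D \<le> K" shows "supports K D \<noteq> {}"
proof -
  have "{0..<D} \<in> supports K D" unfolding supports_def using assms by auto
  then show ?thesis by blast
qed

lemma VII_fin: "finite (V_II L D :: (nat \<Rightarrow> nat \<Rightarrow> 'a::{finite,field}) set)"
  unfolding V_II_def by (rule finite_subset[OF _ conjunct1[OF card_mats[of L D, where 'a='a]]]) blast

lemma VII_ne:
  assumes "L \<le> D" shows "(V_II L D :: (nat \<Rightarrow> nat \<Rightarrow> 'a::field) set) \<noteq> {}"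
proof -
  define I where "I = (\<lambda>i j. if i < L \<and> j < D \<and> i = j then (1::'a) else 0)"
  have "I \<in> mats L D" unfolding I_def mats_def supported_def by auto
  moreover have "full_row_rank L D I" unfolding full_row_rank_def
  proof (intro allI impI)
    fix c :: "nat \<Rightarrow> 'a" and i assume h: "\<forall>j<D. (\<Sum>i<L. c i * I i j) = 0" and i: "i < L"
    have "i < D" using i assms by simp
    have "(\<Sum>i'<L. c i' * I i' i) = (\<Sum>i'<L. if i' = i then c i else 0)"
      by (intro sum.cong) (auto simp: I_def \<open>i < D\<close>)
    also have "\<dots> = c i" using i by simp
    finally show "c i = 0" using h \<open>i < D\<close> by simp
  qed
  ultimately show ?thesis unfolding V_II_def by blast
qed

lemma mats_ne: "mats m n \<noteq> {}"
  unfolding mats_def supported_def by auto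

lemma set_omega:
  assumes "L \<le> D" "D \<le> K"
  shows "set_pmf (omega_II K D L N \<rho> :: (_ \<times> (nat \<Rightarrow> nat \<Rightarrow> 'a::{finite,field}) \<times> _) pmf) =
     {(W,V,R,X). W \<in> supports K D \<and> V \<in> V_II L D \<and> R \<in> set_pmf \<rho> \<and> X \<in> mats K N}"
proof -
  have a: "set_pmf (pmf_of_set (supports K D)) = supports K D"
    using supports_fin supports_ne[OF assms(2)] by simp
  have b: "set_pmf (pmf_of_set (V_II L D :: (nat \<Rightarrow> nat \<Rightarrow> 'a) set)) = V_II L D"
    using VII_fin VII_ne[OF assms(1)] by (intro set_pmf_of_set) auto
  have c: "set_pmf (pmf_of_set (mats K N :: (nat \<Rightarrow> nat \<Rightarrow> 'a) set)) = mats K N"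
    using conjunct1[OF card_mats[of K N, where 'a='a]] mats_ne by (intro set_pmf_of_set) auto
  show ?thesis unfolding omega_II_def by (auto simp: a b c)
qed

lemma nn_le_const:
  assumes "\<And>x. x \<in> set_pmf p \<Longrightarrow> f x \<le> c"
  shows "(\<integral>\<^sup>+x. f x \<partial>measure_pmf p) \<le> c"
proof -
  have "(\<integral>\<^sup>+x. f x \<partial>measure_pmf p) \<le> (\<integral>\<^sup>+x. c \<partial>measure_pmf p)"
    by (rule nn_integral_mono_AE) (simp add: AE_measure_pmf_iff assms)
  also have "\<dots> = c" by (simp add: measure_pmf.emeasure_space_1)
  finally show ?thesis .
qed

lemma emeasure_pmf_of_set_real:
  assumes "finite S" "S \<noteq> {}"
  shows "emeasure (measure_pmf (pmf_of_set S)) A = ennreal (real (card (S \<inter> A)) / real (card S))"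
  using assms by (simp add: measure_pmf.emeasure_eq_measure measure_pmf_of_set)

lemma ans_bound:
  fixes qf :: "nat set \<Rightarrow> (nat \<Rightarrow> nat \<Rightarrow> 'a::{finite,field}) \<Rightarrow> 'r \<Rightarrow> 'q"
  assumes LD: "L \<le> D" "D \<le> K"
    and bnd: "\<And>W V R. W \<in> supports K D \<Longrightarrow> V \<in> V_II L D \<Longrightarrow> R \<in> set_pmf \<rho> \<Longrightarrow>
               card {X \<in> mats K N. af (qf W V R) X = a} \<le> c"
  shows "pmf (map_pmf (\<lambda>(W,V,R,X). af (qf W V R) X) (omega_II K D L N \<rho>)) a
           \<le> real c / real (card (mats K N :: (nat \<Rightarrow> nat \<Rightarrow> 'a) set))"
proof -
  let ?M = "mats K N :: (nat \<Rightarrow> nat \<Rightarrow> 'a) set"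
  let ?G = "\<lambda>(W,V,R,X). af (qf W V R) X"
  have finM: "finite ?M" using card_mats[of K N, where 'a='a] by simp
  have om: "omega_II K D L N \<rho> =
     bind_pmf (pmf_of_set (supports K D)) (\<lambda>W.
     bind_pmf (pmf_of_set (V_II L D)) (\<lambda>V.
     bind_pmf \<rho> (\<lambda>R. map_pmf (\<lambda>X. (W, V, R, X)) (pmf_of_set ?M))))"
    unfolding omega_II_def map_pmf_def by simp
  have sW: "set_pmf (pmf_of_set (supports K D)) = supports K D"
    using supports_fin supports_ne[OF LD(2)] by simp
  have sV: "set_pmf (pmf_of_set (V_II L D :: (nat \<Rightarrow> nat \<Rightarrow> 'a) set)) = V_II L D"
    using VII_fin VII_ne[OF LD(1)] by (intro set_pmf_of_set) auto
  have inner: "emeasure (measure_pmf (pmf_of_set ?M)) ((\<lambda>X. (W, V, R, X)) -` (?G -` {a}))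
      \<le> ennreal (real c / real (card ?M))"
    if W: "W \<in> supports K D" and V: "V \<in> V_II L D" and R: "R \<in> set_pmf \<rho>" for W V R
  proof -
    have "emeasure (measure_pmf (pmf_of_set ?M)) ((\<lambda>X. (W, V, R, X)) -` (?G -` {a})) = ennreal (real (card (?M \<inter> ((\<lambda>X. (W, V, R, X)) -` (?G -` {a})))) / real (card ?M))"
      by (rule emeasure_pmf_of_set_real[OF finM mats_ne])
    also have "?M \<inter> ((\<lambda>X. (W, V, R, X)) -` (?G -` {a})) = {X \<in> ?M. af (qf W V R) X = a}" by auto
    also have "ennreal (real (card {X \<in> ?M. af (qf W V R) X = a}) / real (card ?M)) \<le> ennreal (real c / real (card ?M))"
      using bnd[OF W V R] by (intro ennreal_leI divide_right_mono) simp_all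
    finally show ?thesis .
  qed
  have "ennreal (pmf (map_pmf ?G (omega_II K D L N \<rho>)) a) = emeasure (measure_pmf (omega_II K D L N \<rho>)) (?G -` {a})"
    by (simp add: emeasure_pmf_single[symmetric] del: emeasure_pmf_single)
  also have "\<dots> \<le> ennreal (real c / real (card ?M))"
    unfolding om emeasure_bind_pmf
    by (intro nn_le_const) (auto simp: sW sV intro!: inner)
  finally show ?thesis by (simp add: ennreal_le_iff[symmetric] del: ennreal_le_iff)
qed


lemma entropy_lower:
  fixes p :: "'b pmf" and c :: real
  assumes c: "0 \<le> c" and b: "\<And>x. pmf p x \<le> 2 powr (- c)"
  shows "ennreal c \<le> entropy_pmf p"
proof -
  have pt: "ennreal (pmf p x * c) \<le> ennreal (- pmf p x * log 2 (pmf p x))" for x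
  proof (cases "pmf p x = 0")
    case True then show ?thesis by simp
  next
    case False
    then have pos: "0 < pmf p x" using pmf_nonneg[of p x] by linarith
    have "log 2 (pmf p x) \<le> log 2 (2 powr (- c))"
      by (subst log_le_cancel_iff) (use pos b[of x] in auto)
    then have "log 2 (pmf p x) \<le> - c" by simp
    then have "pmf p x * log 2 (pmf p x) \<le> pmf p x * (- c)"
      by (rule mult_left_mono) (use pos in simp)
    then have "pmf p x * c \<le> - pmf p x * log 2 (pmf p x)" by simp
    then show ?thesis by (rule ennreal_leI)
  qed
  have "(\<integral>\<^sup>+x. ennreal (pmf p x * c) \<partial>count_space UNIV) \<le> entropy_pmf p"
    unfolding entropy_pmf_def by (intro nn_integral_mono pt)
  moreover have "(\<integral>\<^sup>+x. ennreal (pmf p x * c) \<partial>count_space UNIV) = ennreal c"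
  proof -
    have "(\<integral>\<^sup>+x. ennreal (pmf p x * c) \<partial>count_space UNIV) = (\<integral>\<^sup>+x. ennreal c * ennreal (pmf p x) \<partial>count_space UNIV)"
      using c by (simp add: ennreal_mult mult.commute)
    also have "\<dots> = ennreal c * (\<integral>\<^sup>+x. ennreal (pmf p x) \<partial>count_space UNIV)"
      by (rule nn_integral_cmult) simp
    also have "(\<integral>\<^sup>+x. ennreal (pmf p x) \<partial>count_space UNIV) = 1"
      using nn_integral_pmf[where p=p and A=UNIV] by (simp add: measure_pmf.emeasure_space_1)
    finally show ?thesis by simp
  qed
  ultimately show ?thesis by simp
qed

lemma ent_term:
  fixes q m :: real
  assumes "0 \<le> q" "0 < m"
  shows "- q * ln q \<le> q * ln m + 1 / m - q"
proof (cases "q = 0")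
  case True then show ?thesis using assms by simp
next
  case False
  then have q: "0 < q" using assms by simp
  have "ln (1 / (q * m)) \<le> 1 / (q * m) - 1" using q assms by (intro ln_le_minus_one) simp
  then have "q * ln (1 / (q * m)) \<le> q * (1 / (q * m) - 1)" using q by (simp add: mult_left_mono)
  moreover have "q * ln (1 / (q * m)) = - q * ln q - q * ln m"
    using q assms by (simp add: ln_div ln_mult algebra_simps)
  moreover have "q * (1 / (q * m) - 1) = 1 / m - q" using q assms by (simp add: field_simps)
  ultimately show ?thesis by simp
qed

lemma entropy_upper:
  fixes p :: "'b pmf"
  assumes S: "finite S" "set_pmf p \<subseteq> S"
  shows "entropy_pmf p \<le> ennreal (log 2 (real (card S)))"
proof -
  have ne: "S \<noteq> {}" using S set_pmf_not_empty[of p] by blast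
  have cS: "0 < real (card S)" using S ne by (simp add: card_gt_0_iff)
  define f where "f x = - pmf p x * log 2 (pmf p x)" for x
  have f0: "f x = 0" if "x \<notin> S" for x
  proof -
    have "x \<notin> set_pmf p" using that S by blast
    then show ?thesis unfolding f_def by (simp add: set_pmf_eq)
  qed
  have fnn: "0 \<le> f x" for x
  proof (cases "pmf p x = 0")
    case True then show ?thesis unfolding f_def by simp
  next
    case False
    then have pos: "0 < pmf p x" using pmf_nonneg[of p x] by linarith
    have "log 2 (pmf p x) \<le> 0" using pos pmf_le_1[of p x] by simp
    then show ?thesis unfolding f_def using pos by (simp add: mult_nonneg_nonpos)
  qed
  have "entropy_pmf p = (\<integral>\<^sup>+x. ennreal (f x) \<partial>count_space UNIV)" unfolding entropy_pmf_def f_def ..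
  also have "\<dots> = (\<integral>\<^sup>+x. ennreal (f x) * indicator S x \<partial>count_space UNIV)"
    by (intro nn_integral_cong) (auto simp: f0 indicator_def)
  also have "\<dots> = (\<integral>\<^sup>+x. ennreal (f x) \<partial>count_space S)"
    by (simp add: nn_integral_count_space_indicator)
  also have "\<dots> = (\<Sum>x\<in>S. ennreal (f x))" using S(1) by (rule nn_integral_count_space_finite)
  also have "\<dots> = ennreal (\<Sum>x\<in>S. f x)" using fnn by (simp add: sum_ennreal)
  also have "(\<Sum>x\<in>S. f x) \<le> log 2 (real (card S))"
  proof -
    have s1: "(\<Sum>x\<in>S. pmf p x) = 1" using S by (rule sum_pmf_eq_1)
    have "(\<Sum>x\<in>S. - pmf p x * ln (pmf p x)) \<le> (\<Sum>x\<in>S. pmf p x * ln (card S) + 1 / card S - pmf p x)"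
      by (intro sum_mono ent_term cS pmf_nonneg)
    also have "\<dots> = (\<Sum>x\<in>S. pmf p x) * ln (card S) + card S * (1 / card S) - (\<Sum>x\<in>S. pmf p x)"
      by (simp only: sum_subtractf sum.distrib sum_distrib_right sum_constant)
    also have "\<dots> = ln (card S)" using s1 cS by simp
    finally have l: "(\<Sum>x\<in>S. - pmf p x * ln (pmf p x)) \<le> ln (card S)" .
    have "(\<Sum>x\<in>S. f x) = (\<Sum>x\<in>S. - pmf p x * ln (pmf p x)) / ln 2"
      unfolding f_def log_def by (simp add: sum_divide_distrib)
    also have "\<dots> \<le> ln (card S) / ln 2" using l by (simp add: divide_right_mono)
    also have "\<dots> = log 2 (real (card S))" unfolding log_def ..
    finally show ?thesis .
  qed
  finally show ?thesis by (simp add: ennreal_leI)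
qed


lemma cond_zero_det:
  assumes h: "cond_entropy_pmf J = 0" and a: "(z,y) \<in> set_pmf J" "(z',y) \<in> set_pmf J"
  shows "z = z'"
proof (rule ccontr)
  assume ne: "z \<noteq> z'"
  define F where "F zy = ennreal (pmf J zy * log 2 (pmf (map_pmf snd J) (snd zy) / pmf J zy))" for zy
  have "(\<integral>\<^sup>+zy. F zy \<partial>count_space UNIV) = 0" using h unfolding cond_entropy_pmf_def F_def .
  then have "AE zy in count_space UNIV. F zy = 0" by (subst (asm) nn_integral_0_iff_AE) simp_all
  then have F0: "F (z,y) = 0" by (simp add: AE_count_space)
  define p where "p = pmf J (z,y)"
  define p' where "p' = pmf J (z',y)"
  define P where "P = pmf (map_pmf snd J) y"
  have pp: "0 < p" unfolding p_def using a(1) by (simp add: pmf_positive)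
  have pp': "0 < p'" unfolding p'_def using a(2) by (simp add: pmf_positive)
  have "P = measure (measure_pmf J) (snd -` {y})" unfolding P_def by (simp add: pmf_map)
  also have "measure (measure_pmf J) {(z,y),(z',y)} \<le> measure (measure_pmf J) (snd -` {y})"
    by (intro measure_pmf.finite_measure_mono) auto
  moreover have "measure (measure_pmf J) {(z,y),(z',y)} = p + p'"
    using ne unfolding p_def p'_def by (simp add: measure_measure_pmf_finite)
  ultimately have Pge: "p + p' \<le> P" by simp
  have "p * log 2 (P / p) \<le> 0" using F0 unfolding F_def p_def P_def by (simp add: ennreal_eq_0_iff)
  then have "log 2 (P / p) \<le> 0" using pp by (simp add: mult_le_0_iff)
  moreover have "0 < P / p" using Pge pp pp' by simp
  ultimately have "P / p \<le> 1" by simp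
  then have "P \<le> p" using pp by (simp add: divide_le_eq)
  then show False using Pge pp' by simp
qed

lemma cond_zero_of_det:
  assumes det: "\<And>z y. (z,y) \<in> set_pmf J \<Longrightarrow> z = g y"
  shows "cond_entropy_pmf J = 0"
proof -
  have t0: "ennreal (pmf J zy * log 2 (pmf (map_pmf snd J) (snd zy) / pmf J zy)) = 0" for zy
  proof (cases "zy \<in> set_pmf J")
    case False then show ?thesis by (simp add: set_pmf_eq)
  next
    case True
    obtain z y where zy: "zy = (z,y)" by (cases zy)
    have "pmf (map_pmf snd J) y = measure (measure_pmf J) (snd -` {y})" by (simp add: pmf_map)
    also have "\<dots> = measure (measure_pmf J) (snd -` {y} \<inter> set_pmf J)" by (simp add: measure_Int_set_pmf)
    also have "snd -` {y} \<inter> set_pmf J = {(z,y)}"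
    proof
      show "snd -` {y} \<inter> set_pmf J \<subseteq> {(z, y)}"
      proof
        fix w assume w: "w \<in> snd -` {y} \<inter> set_pmf J"
        obtain z1 y1 where w1: "w = (z1,y1)" by (cases w)
        have "y1 = y" using w w1 by simp
        then have "z1 = g y" using det w w1 by blast
        moreover have "z = g y" using det True zy by blast
        ultimately show "w \<in> {(z,y)}" using w1 \<open>y1 = y\<close> by simp
      qed
    next
      show "{(z, y)} \<subseteq> snd -` {y} \<inter> set_pmf J" using True zy by simp
    qed
    also have "measure (measure_pmf J) {(z,y)} = pmf J (z,y)" by (simp add: measure_pmf_single)
    finally have "pmf (map_pmf snd J) (snd zy) = pmf J zy" using zy by simp
    moreover have "pmf J zy > 0" using True by (simp add: pmf_positive)
    ultimately show ?thesis by simp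
  qed
  show ?thesis unfolding cond_entropy_pmf_def by (simp only: t0) simp
qed

lemma converse_pmf:
  fixes qf :: "nat set \<Rightarrow> (nat \<Rightarrow> nat \<Rightarrow> 'a::{finite,field}) \<Rightarrow> 'r \<Rightarrow> 'q"
    and af :: "'q \<Rightarrow> (nat \<Rightarrow> nat \<Rightarrow> 'a) \<Rightarrow> 'b"
  assumes L1: "1 \<le> L" "L \<le> D" "D \<le> K" and prot: "JPLT_II_protocol K D L N \<rho> qf af"
  shows "pmf (map_pmf (\<lambda>(W,V,R,X). af (qf W V R) X) (omega_II K D L N \<rho>)) a
           \<le> 1 / real (CARD('a) ^ ((K - D + L) * N))"
proof -
  let ?\<Omega> = "omega_II K D L N \<rho> :: (nat set \<times> (nat \<Rightarrow> nat \<Rightarrow> 'a) \<times> 'r \<times> (nat \<Rightarrow> nat \<Rightarrow> 'a)) pmf"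
  let ?M = "mats K N :: (nat \<Rightarrow> nat \<Rightarrow> 'a) set"
  define J where "J = map_pmf (\<lambda>(W, V, R, X). (demand L D N W V X, af (qf W V R) X, qf W V R, W, V)) ?\<Omega>"
  have rec: "cond_entropy_pmf J = 0" using prot unfolding JPLT_II_protocol_def J_def Let_def by blast
  have priv: "\<And>q. measure_pmf.prob ?\<Omega> {(W, V, R, X). qf W V R = q} > 0 \<Longrightarrow>
          (\<forall>W' \<in> supports K D.
             measure_pmf.prob ?\<Omega> {(W, V, R, X). W = W' \<and> qf W V R = q}
               / measure_pmf.prob ?\<Omega> {(W, V, R, X). qf W V R = q}
             = 1 / real (K choose D))"
    using prot unfolding JPLT_II_protocol_def Let_def by blast
  have sO: "set_pmf ?\<Omega> = {(W,V,R,X). W \<in> supports K D \<and> V \<in> V_II L D \<and> R \<in> set_pmf \<rho> \<and> X \<in> ?M}"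
    by (rule set_omega[OF L1(2,3)])
  have z0: "(0::nat\<Rightarrow>nat\<Rightarrow>'a) \<in> ?M" unfolding mats_def supported_def by simp
  have chpos: "0 < real (K choose D)" using L1 by simp
  have bnd: "card {X \<in> ?M. af (qf W V R) X = a} \<le> CARD('a) ^ ((D - L) * N)"
    if W: "W \<in> supports K D" and V: "V \<in> V_II L D" and R: "R \<in> set_pmf \<rho>" for W V R
  proof -
    define q0 where "q0 = qf W V R"
    have inS: "(W,V,R,0) \<in> set_pmf ?\<Omega>" using sO W V R z0 by simp
    have pq: "measure_pmf.prob ?\<Omega> {(W, V, R, X). qf W V R = q0} > 0"
      by (rule measure_pmf_posI[OF inS]) (simp add: q0_def)
    have ex: "\<exists>V' R'. V' \<in> V_II L D \<and> R' \<in> set_pmf \<rho> \<and> qf W' V' R' = q0" if W': "W' \<in> supports K D" for W'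
    proof -
      have eq: "measure_pmf.prob ?\<Omega> {(W, V, R, X). W = W' \<and> qf W V R = q0}
               / measure_pmf.prob ?\<Omega> {(W, V, R, X). qf W V R = q0} = 1 / real (K choose D)"
        using priv[OF pq] W' by blast
      have "measure_pmf.prob ?\<Omega> {(W, V, R, X). W = W' \<and> qf W V R = q0} \<noteq> 0"
      proof
        assume "measure_pmf.prob ?\<Omega> {(W, V, R, X). W = W' \<and> qf W V R = q0} = 0"
        then have "1 / real (K choose D) = 0" using eq by simp
        then show False using chpos by simp
      qed
      then have "set_pmf ?\<Omega> \<inter> {(W, V, R, X). W = W' \<and> qf W V R = q0} \<noteq> {}"
        by (simp add: measure_pmf_zero_iff)
      then obtain W1 V1 R1 X1 where "(W1,V1,R1,X1) \<in> set_pmf ?\<Omega>" "W1 = W'" "qf W1 V1 R1 = q0" by auto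
      then show ?thesis using sO by auto
    qed
    obtain Vs Rs where VRs: "\<And>W'. W' \<in> supports K D \<Longrightarrow> Vs W' \<in> V_II L D \<and> Rs W' \<in> set_pmf \<rho> \<and> qf W' (Vs W') (Rs W') = q0"
      using ex by metis
    have VW: "Vs W' \<in> mats L D \<and> full_row_rank L D (Vs W')" if "W' \<in> supports K D" for W'
      using VRs[OF that] unfolding V_II_def by blast
    have recW: "demand L D N W' (Vs W') X = demand L D N W' (Vs W') X'"
      if W': "W' \<in> supports K D" and X: "X \<in> ?M" and X': "X' \<in> ?M" and f: "af q0 X = af q0 X'" for W' X X'
    proof -
      have m1: "(W', Vs W', Rs W', X) \<in> set_pmf ?\<Omega>" using sO VRs[OF W'] W' X by simp
      have m2: "(W', Vs W', Rs W', X') \<in> set_pmf ?\<Omega>" using sO VRs[OF W'] W' X' by simp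
      have q: "qf W' (Vs W') (Rs W') = q0" using VRs[OF W'] by blast
      have j1: "(demand L D N W' (Vs W') X, (af q0 X, q0, W', Vs W')) \<in> set_pmf J"
        unfolding J_def set_map_pmf using m1 q by (intro image_eqI[of _ _ "(W', Vs W', Rs W', X)"]) simp_all
      have j2: "(demand L D N W' (Vs W') X', (af q0 X, q0, W', Vs W')) \<in> set_pmf J"
        unfolding J_def set_map_pmf using m2 q f by (intro image_eqI[of _ _ "(W', Vs W', Rs W', X')"]) simp_all
      show ?thesis by (rule cond_zero_det[OF rec j1 j2])
    qed
    show ?thesis unfolding q0_def[symmetric]
      by (rule fiber_bound[OF L1 VW recW]) auto
  qed
  have "pmf (map_pmf (\<lambda>(W,V,R,X). af (qf W V R) X) ?\<Omega>) a
      \<le> real (CARD('a) ^ ((D - L) * N)) / real (card ?M)"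
    by (rule ans_bound[where af=af and qf=qf and a=a, OF L1(2,3) bnd])
  also have "card ?M = CARD('a) ^ ((D - L) * N) * CARD('a) ^ ((K - D + L) * N)"
  proof -
    have "K * N = (D - L) * N + (K - D + L) * N" using L1 by (simp add: add_mult_distrib[symmetric])
    then show ?thesis using card_mats[of K N, where 'a='a] by (simp add: power_add)
  qed
  also have "real (CARD('a) ^ ((D - L) * N)) / real (CARD('a) ^ ((D - L) * N) * CARD('a) ^ ((K - D + L) * N))
      = 1 / real (CARD('a) ^ ((K - D + L) * N))"
    using card_field_ge2[where 'a='a] by (simp add: field_simps)
  finally show ?thesis .
qed


lemma pow_as_powr:
  assumes "2 \<le> (q::real)"
  shows "1 / q ^ m = 2 powr (- (real m * log 2 q))"
proof -
  have "2 powr (real m * log 2 q) = 2 powr (log 2 q * real m)" by (simp add: mult.commute)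
  also have "\<dots> = (2 powr log 2 q) powr real m" by (simp add: powr_powr)
  also have "2 powr log 2 q = q" using assms by simp
  also have "q powr real m = q ^ m" using assms by (simp add: powr_realpow)
  finally show ?thesis by (simp add: powr_minus divide_inverse)
qed

lemma converse_entropy:
  fixes qf :: "nat set \<Rightarrow> (nat \<Rightarrow> nat \<Rightarrow> 'a::{finite,field}) \<Rightarrow> 'r \<Rightarrow> 'q"
    and af :: "'q \<Rightarrow> (nat \<Rightarrow> nat \<Rightarrow> 'a) \<Rightarrow> 'b"
  assumes L1: "1 \<le> L" "L \<le> D" "D \<le> K" and prot: "JPLT_II_protocol K D L N \<rho> qf af"
  shows "ennreal (real ((K - D + L) * N) * log 2 (real CARD('a)))
     \<le> entropy_pmf (map_pmf (\<lambda>(W,V,R,X). af (qf W V R) X) (omega_II K D L N \<rho>))"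
proof (rule entropy_lower)
  have q2: "2 \<le> real CARD('a)" using card_field_ge2[where 'a='a] by simp
  show "0 \<le> real ((K - D + L) * N) * log 2 (real CARD('a))" using q2 by simp
  fix a
  have "pmf (map_pmf (\<lambda>(W,V,R,X). af (qf W V R) X) (omega_II K D L N \<rho>)) a
       \<le> 1 / real (CARD('a) ^ ((K - D + L) * N))" by (rule converse_pmf[OF L1 prot])
  also have "\<dots> = 2 powr (- (real ((K - D + L) * N) * log 2 (real CARD('a))))"
    using pow_as_powr[OF q2, of "(K - D + L) * N"] by simp
  finally show "pmf (map_pmf (\<lambda>(W,V,R,X). af (qf W V R) X) (omega_II K D L N \<rho>)) a
       \<le> 2 powr (- (real ((K - D + L) * N) * log 2 (real CARD('a))))" .
qed

lemma ennreal_div_le: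
  assumes x: "0 \<le> x" and c: "0 < c" and H: "ennreal c \<le> H"
  shows "ennreal x / H \<le> ennreal (x / c)"
proof (cases H)
  case (real h)
  then have hc: "c \<le> h" using H c by (simp add: ennreal_le_iff[symmetric] del: ennreal_le_iff)
  then have hp: "0 < h" using c by simp
  have "ennreal x / H = ennreal (x / h)" using real x hp by (simp add: divide_ennreal)
  also have "\<dots> \<le> ennreal (x / c)" using hc c x by (intro ennreal_leI divide_left_mono) simp_all
  finally show ?thesis .
next
  case top then show ?thesis by simp
qed

lemma converse_rate:
  fixes qf :: "nat set \<Rightarrow> (nat \<Rightarrow> nat \<Rightarrow> 'a::{finite,field}) \<Rightarrow> 'r \<Rightarrow> 'q"
    and af :: "'q \<Rightarrow> (nat \<Rightarrow> nat \<Rightarrow> 'a) \<Rightarrow> 'b"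
  assumes L1: "1 \<le> L" "L \<le> D" "D \<le> K" and N: "1 \<le> N" and prot: "JPLT_II_protocol K D L N \<rho> qf af"
  shows "JPLT_II_rate K D L N \<rho> qf af \<le> ennreal (real L / real (K - D + L))"
proof -
  have q2: "2 \<le> real CARD('a)" using card_field_ge2[where 'a='a] by simp
  have lq: "0 < log 2 (real CARD('a))" using q2 by simp
  let ?c = "real ((K - D + L) * N) * log 2 (real CARD('a))"
  have cpos: "0 < ?c" using lq N L1 by simp
  have "JPLT_II_rate K D L N \<rho> qf af \<le> ennreal (real L * (real N * log 2 (real CARD('a))) / ?c)"
    unfolding JPLT_II_rate_def
    by (rule ennreal_div_le[OF _ cpos converse_entropy[OF L1 prot]]) (use lq in simp)
  also have "real L * (real N * log 2 (real CARD('a))) / ?c = real L / real (K - D + L)"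
  proof -
    have y1: "log 2 (real CARD('a)) \<noteq> 0" using lq by linarith
    have y2: "real N \<noteq> 0" using N by simp
    have y: "real N * log 2 (real CARD('a)) \<noteq> 0" using y1 y2 by (simp only: mult_eq_0_iff) blast
    have "?c = real (K - D + L) * (real N * log 2 (real CARD('a)))" by (simp only: of_nat_mult mult.assoc)
    then show ?thesis using nonzero_mult_divide_mult_cancel_right[OF y, of "real L" "real (K - D + L)"] by simp
  qed
  finally show ?thesis .
qed



lemma ev_inj:
  fixes \<beta> :: "nat \<Rightarrow> 'a::field"
  assumes inj: "inj_on \<beta> {0..<D}" and c: "c \<in> vecs D" and c': "c' \<in> vecs D"
    and e: "\<And>i. i < D \<Longrightarrow> (\<Sum>d<D. c d * \<beta> i ^ d) = (\<Sum>d<D. c' d * \<beta> i ^ d)"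
  shows "c = c'"
proof -
  define p where "p = (\<Sum>d<D. monom (c d - c' d) d)"
  have cp: "coeff p n = (if n < D then c n - c' n else 0)" for n
    unfolding p_def by (simp add: coeff_sum coeff_monom)
  have pp: "poly p x = (\<Sum>d<D. (c d - c' d) * x ^ d)" for x
    unfolding p_def by (simp add: poly_sum poly_monom)
  have p0: "p = 0"
  proof (rule ccontr)
    assume pn: "p \<noteq> 0"
    have "coeff p (degree p) \<noteq> 0" using pn by simp
    then have dg: "degree p < D"
    proof (cases "degree p < D")
      case False then have "coeff p (degree p) = 0" using cp[of "degree p"] by simp
      then show ?thesis using \<open>coeff p (degree p) \<noteq> 0\<close> by simp
    qed
    have sub: "\<beta> ` {0..<D} \<subseteq> {x. poly p x = 0}"
    proof
      fix x assume "x \<in> \<beta> ` {0..<D}"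
      then obtain i where i: "i < D" "x = \<beta> i" by auto
      have "poly p x = (\<Sum>d<D. c d * \<beta> i ^ d) - (\<Sum>d<D. c' d * \<beta> i ^ d)"
        unfolding pp i(2) by (simp add: left_diff_distrib sum_subtractf)
      then show "x \<in> {x. poly p x = 0}" using e[OF i(1)] by simp
    qed
    have "D = card (\<beta> ` {0..<D})" using card_image[OF inj] by simp
    also have "\<dots> \<le> card {x. poly p x = 0}" by (rule card_mono[OF poly_roots_finite[OF pn] sub])
    also have "\<dots> \<le> degree p" by (rule card_poly_roots_bound[OF pn])
    finally show False using dg by simp
  qed
  show "c = c'"
  proof
    fix n show "c n = c' n"
    proof (cases "n < D")
      case True then show ?thesis using cp[of n] p0 by simp
    next
      case False then show ?thesis using c c' unfolding vecs_def by simp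
    qed
  qed
qed

lemma ev_surj:
  fixes \<beta> :: "nat \<Rightarrow> 'a::{finite,field}"
  assumes inj: "inj_on \<beta> {0..<D}"
  shows "\<exists>c. \<forall>i<D. (\<Sum>d<D. c d * \<beta> i ^ d) = t i"
proof -
  define ev where "ev c = (\<lambda>i. if i < D then (\<Sum>d<D. c d * \<beta> i ^ d) else 0)" for c :: "nat \<Rightarrow> 'a"
  have injev: "inj_on ev (vecs D)"
  proof (rule inj_onI)
    fix c c' assume h: "c \<in> vecs D" "c' \<in> vecs D" "ev c = ev c'"
    show "c = c'"
    proof (rule ev_inj[OF inj h(1,2)])
      fix i assume "i < D"
      then show "(\<Sum>d<D. c d * \<beta> i ^ d) = (\<Sum>d<D. c' d * \<beta> i ^ d)"
        using fun_cong[OF h(3), of i] unfolding ev_def by simp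
    qed
  qed
  have sub: "ev ` vecs D \<subseteq> vecs D" unfolding ev_def vecs_def by auto
  have finV: "finite (vecs D :: (nat \<Rightarrow> 'a) set)" using card_vecs[of D, where 'a='a] by simp
  have "card (ev ` vecs D) = card (vecs D :: (nat \<Rightarrow> 'a) set)" by (rule card_image[OF injev])
  then have eq: "ev ` vecs D = vecs D" by (rule card_subset_eq[OF finV sub])
  have "(\<lambda>i. if i < D then t i else 0) \<in> vecs D" unfolding vecs_def by simp
  then have "(\<lambda>i. if i < D then t i else 0) \<in> ev ` vecs D" using eq by simp
  then obtain c where c: "c \<in> vecs D" "(\<lambda>i. if i < D then t i else 0) = ev c" by (rule imageE)
  show ?thesis
  proof (intro exI allI impI)
    fix i assume "i < D"
    then show "(\<Sum>d<D. c d * \<beta> i ^ d) = t i" using fun_cong[OF c(2), of i] unfolding ev_def by simp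
  qed
qed

lemma tv_inj:
  fixes \<beta> :: "nat \<Rightarrow> 'a::{finite,field}"
  assumes inj: "inj_on \<beta> {0..<D}" and h: "\<And>d. d < D \<Longrightarrow> (\<Sum>j<D. \<beta> j ^ d * v j) = 0"
    and m: "m < D"
  shows "v m = 0"
proof -
  obtain c where c: "\<forall>i<D. (\<Sum>d<D. c d * \<beta> i ^ d) = (if i = m then 1 else 0)"
    using ev_surj[OF inj, of "\<lambda>i. if i = m then 1 else 0"] by blast
  have "(\<Sum>j<D. v j * (if j = m then 1 else 0)) = (\<Sum>j<D. if j = m then v j else 0)"
    by (intro sum.cong) auto
  also have "\<dots> = v m" using m by simp
  finally have "v m = (\<Sum>j<D. v j * (if j = m then 1 else 0))" by simp
  also have "\<dots> = (\<Sum>j<D. v j * (\<Sum>d<D. c d * \<beta> j ^ d))" using c by (intro sum.cong) auto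
  also have "\<dots> = (\<Sum>j<D. \<Sum>d<D. c d * (\<beta> j ^ d * v j))" by (simp add: sum_distrib_left mult_ac)
  also have "\<dots> = (\<Sum>d<D. \<Sum>j<D. c d * (\<beta> j ^ d * v j))" by (rule sum.swap)
  also have "\<dots> = (\<Sum>d<D. c d * (\<Sum>j<D. \<beta> j ^ d * v j))" by (simp add: sum_distrib_left)
  also have "\<dots> = 0" using h by simp
  finally show ?thesis .
qed


definition wsel :: "nat set \<Rightarrow> nat \<Rightarrow> nat" where
  "wsel W j = sorted_list_of_set W ! j"

definition qmat :: "(nat \<Rightarrow> 'a) \<Rightarrow> nat \<Rightarrow> nat \<Rightarrow> nat set \<Rightarrow> (nat \<Rightarrow> nat \<Rightarrow> 'a::field) \<Rightarrow> nat \<Rightarrow> nat \<Rightarrow> 'a" where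
  "qmat \<alpha> D L W V = (\<lambda>d l. if d < D \<and> l < L then (\<Sum>j<D. \<alpha> (wsel W j) ^ d * V l j) else 0)"

definition FR :: "nat \<Rightarrow> nat \<Rightarrow> (nat \<Rightarrow> nat \<Rightarrow> 'a::field) set" where
  "FR D L = {B \<in> mats D L. full_row_rank L D (\<lambda>i j. B j i)}"

lemma wsel_K: "W \<in> supports K D \<Longrightarrow> j < D \<Longrightarrow> wsel W j < K"
  using sorted_W(4)[of W K D j] unfolding wsel_def supports_def by auto

lemma beta_inj:
  assumes a: "inj_on \<alpha> {0..<K}" and W: "W \<in> supports K D"
  shows "inj_on (\<lambda>j. \<alpha> (wsel W j)) {0..<D}"
proof (rule inj_onI)
  fix i j assume ij: "i \<in> {0..<D}" "j \<in> {0..<D}" "\<alpha> (wsel W i) = \<alpha> (wsel W j)"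
  have "wsel W i = wsel W j" using a ij wsel_K[OF W, of i] wsel_K[OF W, of j] by (auto dest: inj_onD)
  moreover have "distinct (sorted_list_of_set W)" by simp
  moreover have "length (sorted_list_of_set W) = D" using sorted_W(2)[OF W] .
  ultimately show "i = j" using ij unfolding wsel_def by (simp add: nth_eq_iff_index_eq)
qed

lemma FR_card: "finite (FR D L :: (nat \<Rightarrow> nat \<Rightarrow> 'a::{finite,field}) set) \<and> card (FR D L :: (nat \<Rightarrow> nat \<Rightarrow> 'a) set) = card (V_II L D :: (nat \<Rightarrow> nat \<Rightarrow> 'a) set)"
proof -
  define tr where "tr M = (\<lambda>i j. M j i)" for M :: "nat \<Rightarrow> nat \<Rightarrow> 'a"
  have bij: "bij_betw tr (V_II L D) (FR D L)"
  proof (rule bij_betwI')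
    fix x y show "(tr x = tr y) = (x = y)" unfolding tr_def by (metis ext)
  next
    fix x :: "nat \<Rightarrow> nat \<Rightarrow> 'a" assume "x \<in> V_II L D"
    then show "tr x \<in> FR D L" unfolding tr_def FR_def V_II_def mats_def supported_def by auto
  next
    fix y :: "nat \<Rightarrow> nat \<Rightarrow> 'a" assume y: "y \<in> FR D L"
    have "tr y \<in> V_II L D" using y unfolding tr_def FR_def V_II_def mats_def supported_def by auto
    moreover have "y = tr (tr y)" unfolding tr_def by simp
    ultimately show "\<exists>x\<in>V_II L D. y = tr x" by blast
  qed
  have "finite (V_II L D :: (nat \<Rightarrow> nat \<Rightarrow> 'a) set)" by (rule VII_fin)
  then show ?thesis using bij_betw_finite[OF bij] bij_betw_same_card[OF bij] by simp
qed

lemma qmat_bij: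
  fixes \<alpha> :: "nat \<Rightarrow> 'a::{finite,field}"
  assumes a: "inj_on \<alpha> {0..<K}" and W: "W \<in> supports K D"
  shows "bij_betw (qmat \<alpha> D L W) (V_II L D) (FR D L)"
proof -
  have bi: "inj_on (\<lambda>j. \<alpha> (wsel W j)) {0..<D}" by (rule beta_inj[OF a W])
  have inj: "inj_on (qmat \<alpha> D L W) (V_II L D)"
  proof (rule inj_onI)
    fix V V' assume h: "V \<in> V_II L D" "V' \<in> V_II L D" "qmat \<alpha> D L W V = qmat \<alpha> D L W V'"
    show "V = V'"
    proof (intro ext)
      fix l j
      show "V l j = V' l j"
      proof (cases "l < L \<and> j < D")
        case True
        have "(\<Sum>j'<D. \<alpha> (wsel W j') ^ d * (V l j' - V' l j')) = 0" if d: "d < D" for d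
        proof -
          have "qmat \<alpha> D L W V d l = qmat \<alpha> D L W V' d l" using h(3) by simp
          then have "(\<Sum>j'<D. \<alpha> (wsel W j') ^ d * V l j') = (\<Sum>j'<D. \<alpha> (wsel W j') ^ d * V' l j')"
            using d True unfolding qmat_def by simp
          then show ?thesis by (simp add: right_diff_distrib sum_subtractf)
        qed
        then have "V l j - V' l j = 0" using tv_inj[OF bi, of "\<lambda>j'. V l j' - V' l j'" j] True by blast
        then show ?thesis by simp
      next
        case False
        then show ?thesis using h(1,2) unfolding V_II_def mats_def supported_def by auto
      qed
    qed
  qed
  have into: "qmat \<alpha> D L W ` V_II L D \<subseteq> FR D L"
  proof
    fix B assume "B \<in> qmat \<alpha> D L W ` V_II L D"
    then obtain V where V: "V \<in> V_II L D" "B = qmat \<alpha> D L W V" by blast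
    have Bm: "B \<in> mats D L" unfolding V(2) qmat_def mats_def supported_def by auto
    have fr: "full_row_rank L D V" using V(1) unfolding V_II_def by blast
    have "full_row_rank L D (\<lambda>i j. B j i)" unfolding full_row_rank_def
    proof (intro allI impI)
      fix c :: "nat \<Rightarrow> 'a" and i assume hc: "\<forall>j<D. (\<Sum>i<L. c i * B j i) = 0" and i: "i < L"
      have "(\<Sum>j'<D. \<alpha> (wsel W j') ^ d * (\<Sum>i<L. c i * V i j')) = 0" if d: "d < D" for d
      proof -
        have "(\<Sum>j'<D. \<alpha> (wsel W j') ^ d * (\<Sum>i<L. c i * V i j')) =
              (\<Sum>j'<D. \<Sum>i<L. c i * (\<alpha> (wsel W j') ^ d * V i j'))"
          by (simp add: sum_distrib_left mult_ac)
        also have "\<dots> = (\<Sum>i<L. \<Sum>j'<D. c i * (\<alpha> (wsel W j') ^ d * V i j'))" by (rule sum.swap)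
        also have "\<dots> = (\<Sum>i<L. c i * B d i)"
          unfolding V(2) qmat_def using d by (intro sum.cong) (simp_all add: sum_distrib_left)
        also have "\<dots> = 0" using hc d by blast
        finally show ?thesis .
      qed
      then have z: "\<forall>j<D. (\<Sum>i<L. c i * V i j) = 0"
        using tv_inj[OF bi, where v="\<lambda>j'. \<Sum>i<L. c i * V i j'"] by blast
      show "c i = 0" using fr[unfolded full_row_rank_def, rule_format, of c] z i by blast
    qed
    then show "B \<in> FR D L" using Bm unfolding FR_def by blast
  qed
  have "card (qmat \<alpha> D L W ` V_II L D) = card (FR D L :: (nat \<Rightarrow> nat \<Rightarrow> 'a) set)"
    using card_image[OF inj] FR_card[of D L, where 'a='a] by simp
  then have "qmat \<alpha> D L W ` V_II L D = FR D L" using card_subset_eq[OF conjunct1[OF FR_card] into] by blast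
  then show ?thesis using inj unfolding bij_betw_def by blast
qed


definition Yc :: "(nat \<Rightarrow> 'a) \<Rightarrow> nat \<Rightarrow> (nat \<Rightarrow> nat \<Rightarrow> 'a::field) \<Rightarrow> nat \<Rightarrow> 'a" where
  "Yc \<alpha> D X = (SOME c. \<forall>i<D. (\<Sum>d<D. c d * \<alpha> i ^ d) = X i 0)"

lemma Yc_prop:
  fixes \<alpha> :: "nat \<Rightarrow> 'a::{finite,field}"
  assumes "inj_on \<alpha> {0..<D}" "i < D"
  shows "(\<Sum>d<D. Yc \<alpha> D X d * \<alpha> i ^ d) = X i 0"
proof -
  have "\<exists>c. \<forall>i<D. (\<Sum>d<D. c d * \<alpha> i ^ d) = X i 0" by (rule ev_surj[OF assms(1)])
  then have "\<forall>i<D. (\<Sum>d<D. Yc \<alpha> D X d * \<alpha> i ^ d) = X i 0" unfolding Yc_def by (rule someI_ex)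
  then show ?thesis using assms(2) by blast
qed

definition Amat :: "(nat \<Rightarrow> 'a) \<Rightarrow> nat \<Rightarrow> nat \<Rightarrow> nat \<Rightarrow> (nat \<Rightarrow> nat \<Rightarrow> 'a::field) \<Rightarrow> (nat \<Rightarrow> nat \<Rightarrow> 'a) \<Rightarrow> nat \<Rightarrow> nat \<Rightarrow> 'a" where
  "Amat \<alpha> K D L B X = (\<lambda>i n. if n = 0 \<and> i < L then (\<Sum>d<D. B d i * Yc \<alpha> D X d)
     else if n = 0 \<and> L \<le> i \<and> i < L + (K - D) then X (D + (i - L)) 0 - (\<Sum>d<D. Yc \<alpha> D X d * \<alpha> (D + (i - L)) ^ d)
     else 0)"

definition qfS :: "(nat \<Rightarrow> 'a) \<Rightarrow> nat \<Rightarrow> nat \<Rightarrow> nat \<Rightarrow> nat set \<Rightarrow> (nat \<Rightarrow> nat \<Rightarrow> 'a::{finite,field}) \<Rightarrow> nat \<Rightarrow> nat" where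
  "qfS \<alpha> K D L W V R = to_nat_on (mats D L) (qmat \<alpha> D L W V)"

definition afS :: "(nat \<Rightarrow> 'a) \<Rightarrow> nat \<Rightarrow> nat \<Rightarrow> nat \<Rightarrow> nat \<Rightarrow> (nat \<Rightarrow> nat \<Rightarrow> 'a::{finite,field}) \<Rightarrow> nat" where
  "afS \<alpha> K D L q X = to_nat_on (mats (K - D + L) 1) (Amat \<alpha> K D L (from_nat_into (mats D L) q) X)"

definition recS :: "(nat \<Rightarrow> 'a) \<Rightarrow> nat \<Rightarrow> nat \<Rightarrow> nat \<Rightarrow> nat \<times> nat \<times> nat set \<times> (nat \<Rightarrow> nat \<Rightarrow> 'a::{finite,field}) \<Rightarrow> nat \<Rightarrow> nat \<Rightarrow> 'a" where
  "recS \<alpha> K D L y = (case y of (a, q, W, V) \<Rightarrow>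
     (\<lambda>i n. if i < L \<and> n < 1 then from_nat_into (mats (K - D + L) 1) a i 0 +
        (\<Sum>j<D. V i j * (if D \<le> wsel W j then from_nat_into (mats (K - D + L) 1) a (L + (wsel W j - D)) 0 else 0))
      else 0))"

lemma countable_mats: "countable (mats m n :: (nat \<Rightarrow> nat \<Rightarrow> 'a::{finite,zero}) set)"
  using card_mats[of m n, where 'a='a] by (simp add: countable_finite)

lemma qmat_mats: "qmat \<alpha> D L W V \<in> mats D L"
  unfolding qmat_def mats_def supported_def by auto

lemma Amat_mats: assumes "D \<le> K" shows "Amat \<alpha> K D L B X \<in> mats (K - D + L) 1"
  unfolding Amat_def mats_def supported_def using assms by auto

lemma recover:
  fixes \<alpha> :: "nat \<Rightarrow> 'a::{finite,field}"
  assumes a: "inj_on \<alpha> {0..<K}" and L1: "1 \<le> L" "L \<le> D" "D \<le> K"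
    and W: "W \<in> supports K D" and X: "X \<in> mats K 1"
  shows "demand L D 1 W V X = recS \<alpha> K D L (afS \<alpha> K D L (qfS \<alpha> K D L W V R) X, qfS \<alpha> K D L W V R, W, V)"
proof -
  define A where "A = Amat \<alpha> K D L (qmat \<alpha> D L W V) X"
  have dq: "from_nat_into (mats D L) (qfS \<alpha> K D L W V R) = qmat \<alpha> D L W V"
    unfolding qfS_def by (rule from_nat_into_to_nat_on[OF countable_mats qmat_mats])
  have dA: "from_nat_into (mats (K - D + L) 1) (afS \<alpha> K D L (qfS \<alpha> K D L W V R) X) = A"
    unfolding afS_def dq A_def by (rule from_nat_into_to_nat_on[OF countable_mats Amat_mats[OF L1(3)]])
  have aD: "inj_on \<alpha> {0..<D}" by (rule inj_on_subset[OF a]) (use L1 in auto)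
  have Xdec: "X (wsel W j) 0 = (\<Sum>d<D. Yc \<alpha> D X d * \<alpha> (wsel W j) ^ d) +
      (if D \<le> wsel W j then A (L + (wsel W j - D)) 0 else 0)" if j: "j < D" for j
  proof (cases "D \<le> wsel W j")
    case False
    then show ?thesis using Yc_prop[OF aD, of "wsel W j" X] by simp
  next
    case True
    have k: "wsel W j < K" by (rule wsel_K[OF W j])
    have "A (L + (wsel W j - D)) 0 = X (D + (wsel W j - D)) 0 - (\<Sum>d<D. Yc \<alpha> D X d * \<alpha> (D + (wsel W j - D)) ^ d)"
      unfolding A_def Amat_def using k True L1 by auto
    also have "D + (wsel W j - D) = wsel W j" using True by simp
    finally show ?thesis using True by simp
  qed
  show ?thesis
  proof (intro ext)
    fix i n
    show "demand L D 1 W V X i n = recS \<alpha> K D L (afS \<alpha> K D L (qfS \<alpha> K D L W V R) X, qfS \<alpha> K D L W V R, W, V) i n"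
    proof (cases "i < L \<and> n < 1")
      case False
      then show ?thesis unfolding demand_def recS_def by auto
    next
      case True
      then have i: "i < L" and n: "n = 0" by auto
      have "demand L D 1 W V X i n = (\<Sum>j<D. V i j * X (wsel W j) 0)"
        unfolding demand_def wsel_def using i n by simp
      also have "\<dots> = (\<Sum>j<D. V i j * (\<Sum>d<D. Yc \<alpha> D X d * \<alpha> (wsel W j) ^ d)) +
          (\<Sum>j<D. V i j * (if D \<le> wsel W j then A (L + (wsel W j - D)) 0 else 0))"
        by (simp add: Xdec distrib_left sum.distrib)
      also have "(\<Sum>j<D. V i j * (\<Sum>d<D. Yc \<alpha> D X d * \<alpha> (wsel W j) ^ d)) = A i 0"
      proof -
        have "(\<Sum>j<D. V i j * (\<Sum>d<D. Yc \<alpha> D X d * \<alpha> (wsel W j) ^ d)) =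
              (\<Sum>j<D. \<Sum>d<D. Yc \<alpha> D X d * (\<alpha> (wsel W j) ^ d * V i j))"
          by (simp add: sum_distrib_left mult_ac)
        also have "\<dots> = (\<Sum>d<D. \<Sum>j<D. Yc \<alpha> D X d * (\<alpha> (wsel W j) ^ d * V i j))" by (rule sum.swap)
        also have "\<dots> = (\<Sum>d<D. qmat \<alpha> D L W V d i * Yc \<alpha> D X d)"
          unfolding qmat_def using i by (intro sum.cong) (simp_all add: sum_distrib_left mult_ac)
        also have "\<dots> = A i 0" unfolding A_def Amat_def using i by simp
        finally show ?thesis .
      qed
      finally show ?thesis using i n by (simp only: recS_def prod.case dA) simp
    qed
  qed
qed


lemma pair_pmf_of_set:
  assumes "finite A" "A \<noteq> {}" "finite B" "B \<noteq> {}"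
  shows "pair_pmf (pmf_of_set A) (pmf_of_set B) = pmf_of_set (A \<times> B)"
proof (rule pmf_eqI)
  fix x :: "'a \<times> 'b"
  obtain a b where x: "x = (a,b)" by (cases x)
  show "pmf (pair_pmf (pmf_of_set A) (pmf_of_set B)) x = pmf (pmf_of_set (A \<times> B)) x"
    unfolding x pmf_pair using assms by (simp add: indicator_def card_cartesian_product)
qed

lemma map_WV:
  assumes "L \<le> D" "D \<le> K"
  shows "map_pmf (\<lambda>(W,V,R,X). (W,V)) (omega_II K D L N \<rho> :: (_ \<times> (nat \<Rightarrow> nat \<Rightarrow> 'a::{finite,field}) \<times> _) pmf)
     = pmf_of_set (supports K D \<times> (V_II L D :: (nat \<Rightarrow> nat \<Rightarrow> 'a) set))"
proof -
  have "map_pmf (\<lambda>(W,V,R,X). (W,V)) (omega_II K D L N \<rho> :: (_ \<times> (nat \<Rightarrow> nat \<Rightarrow> 'a) \<times> _) pmf)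
     = pair_pmf (pmf_of_set (supports K D)) (pmf_of_set (V_II L D :: (nat \<Rightarrow> nat \<Rightarrow> 'a) set))"
    unfolding omega_II_def pair_pmf_def by (simp add: map_bind_pmf)
  also have "\<dots> = pmf_of_set (supports K D \<times> (V_II L D :: (nat \<Rightarrow> nat \<Rightarrow> 'a) set))"
    using supports_fin supports_ne[OF assms(2)] VII_fin VII_ne[OF assms(1)] by (intro pair_pmf_of_set) auto
  finally show ?thesis .
qed

lemma prob_WV:
  assumes "L \<le> D" "D \<le> K"
  shows "measure_pmf.prob (omega_II K D L N \<rho> :: (_ \<times> (nat \<Rightarrow> nat \<Rightarrow> 'a::{finite,field}) \<times> _) pmf) {(W,V,R,X). P W V}
     = real (card ((supports K D \<times> (V_II L D :: (nat \<Rightarrow> nat \<Rightarrow> 'a) set)) \<inter> {(W,V). P W V}))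
       / real (card (supports K D \<times> (V_II L D :: (nat \<Rightarrow> nat \<Rightarrow> 'a) set)))"
proof -
  let ?\<Omega> = "omega_II K D L N \<rho> :: (_ \<times> (nat \<Rightarrow> nat \<Rightarrow> 'a) \<times> _) pmf"
  have e: "{(W,V,R,X). P W V} = (\<lambda>(W,V,R,X). (W,V)) -` {(W,V). P W V}" by auto
  have "measure_pmf.prob ?\<Omega> {(W,V,R,X). P W V} = measure_pmf.prob ?\<Omega> ((\<lambda>(W,V,R,X). (W,V)) -` {(W,V). P W V})"
    by (simp only: e)
  also have "\<dots> = measure_pmf.prob (map_pmf (\<lambda>(W,V,R,X). (W,V)) ?\<Omega>) {(W,V). P W V}"
    by (rule measure_map_pmf[symmetric])
  also have "\<dots> = measure_pmf.prob (pmf_of_set (supports K D \<times> (V_II L D :: (nat \<Rightarrow> nat \<Rightarrow> 'a) set))) {(W,V). P W V}"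
    by (simp only: map_WV[OF assms])
  also have "\<dots> = real (card ((supports K D \<times> (V_II L D :: (nat \<Rightarrow> nat \<Rightarrow> 'a) set)) \<inter> {(W,V). P W V}))
       / real (card (supports K D \<times> (V_II L D :: (nat \<Rightarrow> nat \<Rightarrow> 'a) set)))"
  proof (rule measure_pmf_of_set)
    show "finite (supports K D \<times> (V_II L D :: (nat \<Rightarrow> nat \<Rightarrow> 'a) set))"
      by (rule finite_cartesian_product[OF supports_fin VII_fin])
    show "supports K D \<times> (V_II L D :: (nat \<Rightarrow> nat \<Rightarrow> 'a) set) \<noteq> {}"
      using supports_ne[OF assms(2)] VII_ne[OF assms(1)] by simp
  qed
  finally show ?thesis .
qed

lemma card_bij_filter:
  assumes "bij_betw f A B"
  shows "card {x \<in> A. g (f x) = q} = card {y \<in> B. g y = q}"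
proof -
  have inj: "inj_on f {x \<in> A. g (f x) = q}" using assms unfolding bij_betw_def by (auto intro: inj_on_subset)
  have "f ` {x \<in> A. g (f x) = q} = {y \<in> B. g y = q}" using assms unfolding bij_betw_def by auto
  then show ?thesis using card_image[OF inj] by simp
qed

lemma privacy_scheme:
  fixes \<alpha> :: "nat \<Rightarrow> 'a::{finite,field}"
  assumes a: "inj_on \<alpha> {0..<K}" and L1: "1 \<le> L" "L \<le> D" "D \<le> K"
    and pos: "measure_pmf.prob (omega_II K D L N \<rho>) {(W, V, R, X). qfS \<alpha> K D L W V R = q} > 0"
    and W': "W' \<in> supports K D"
  shows "measure_pmf.prob (omega_II K D L N \<rho>) {(W, V, R, X). W = W' \<and> qfS \<alpha> K D L W V R = q}
               / measure_pmf.prob (omega_II K D L N \<rho>) {(W, V, R, X). qfS \<alpha> K D L W V R = q}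
             = 1 / real (K choose D)"
proof -
  let ?S = "supports K D" and ?T = "V_II L D :: (nat \<Rightarrow> nat \<Rightarrow> 'a) set"
  define cq where "cq = card {B \<in> (FR D L :: (nat \<Rightarrow> nat \<Rightarrow> 'a) set). to_nat_on (mats D L) B = q}"
  have cW: "card {V \<in> ?T. qfS \<alpha> K D L W V R = q} = cq" if W: "W \<in> ?S" for W R
    unfolding qfS_def cq_def by (rule card_bij_filter[OF qmat_bij[OF a W]])
  have num: "(?S \<times> ?T) \<inter> {(W,V). W = W' \<and> qfS \<alpha> K D L W V 0 = q} = (\<lambda>V. (W',V)) ` {V \<in> ?T. qfS \<alpha> K D L W' V 0 = q}"
    using W' by auto
  have cnum: "card ((?S \<times> ?T) \<inter> {(W,V). W = W' \<and> qfS \<alpha> K D L W V 0 = q}) = cq"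
    unfolding num using cW[OF W'] by (subst card_image) (auto intro: inj_onI)
  have den: "(?S \<times> ?T) \<inter> {(W,V). qfS \<alpha> K D L W V 0 = q} = Sigma ?S (\<lambda>W. {V \<in> ?T. qfS \<alpha> K D L W V 0 = q})"
    by auto
  have cden: "card ((?S \<times> ?T) \<inter> {(W,V). qfS \<alpha> K D L W V 0 = q}) = card ?S * cq"
  proof -
    have fin: "finite {V \<in> ?T. qfS \<alpha> K D L W V 0 = q}" for W by (rule finite_subset[OF _ VII_fin]) blast
    have "card (Sigma ?S (\<lambda>W. {V \<in> ?T. qfS \<alpha> K D L W V 0 = q})) = (\<Sum>W\<in>?S. card {V \<in> ?T. qfS \<alpha> K D L W V 0 = q})"
      by (rule card_SigmaI[OF supports_fin]) (use fin in blast)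
    also have "\<dots> = (\<Sum>W\<in>?S. cq)" using cW by (intro sum.cong) auto
    finally show ?thesis unfolding den by simp
  qed
  have e1: "{(W, V, R, X). W = W' \<and> qfS \<alpha> K D L W V R = q} = {(W, V, R, X::nat \<Rightarrow> nat \<Rightarrow> 'a). W = W' \<and> qfS \<alpha> K D L W V 0 = q}"
    by (simp add: qfS_def)
  have e2: "{(W, V, R, X). qfS \<alpha> K D L W V R = q} = {(W, V, R, X::nat \<Rightarrow> nat \<Rightarrow> 'a). qfS \<alpha> K D L W V 0 = q}"
    by (simp add: qfS_def)
  have p1: "measure_pmf.prob (omega_II K D L N \<rho>) {(W, V, R, X). W = W' \<and> qfS \<alpha> K D L W V R = q}
     = real cq / real (card (?S \<times> ?T))"
    using prob_WV[OF L1(2,3), where N=N and \<rho>=\<rho> and P="\<lambda>W V. W = W' \<and> qfS \<alpha> K D L W V 0 = q"] cnum unfolding e1 by simp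
  have p2: "measure_pmf.prob (omega_II K D L N \<rho>) {(W, V, R, X). qfS \<alpha> K D L W V R = q}
     = real (card ?S * cq) / real (card (?S \<times> ?T))"
    using prob_WV[OF L1(2,3), where N=N and \<rho>=\<rho> and P="\<lambda>W V. qfS \<alpha> K D L W V 0 = q"] cden unfolding e2 by simp
  have cqp: "cq \<noteq> 0" using pos p2 by (cases "cq = 0") auto
  have fST: "finite (?S \<times> ?T)" by (rule finite_cartesian_product[OF supports_fin VII_fin])
  have neST: "?S \<times> ?T \<noteq> {}" using supports_ne[OF L1(3)] VII_ne[OF L1(2)] by simp
  have cT: "0 < card (?S \<times> ?T)" using fST neST by (simp add: card_gt_0_iff)
  have cS: "0 < card ?S" using supports_fin supports_ne[OF L1(3)] by (simp add: card_gt_0_iff)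
  show ?thesis unfolding p1 p2 supports_card[symmetric] using cqp cT cS by (simp add: field_simps)
qed


lemma achievability:
  fixes \<alpha> :: "nat \<Rightarrow> 'a::{finite,field}"
  assumes a: "inj_on \<alpha> {0..<K}" and L1: "1 \<le> L" "L \<le> D" "D \<le> K"
  shows "JPLT_II_protocol K D L 1 (return_pmf (0::nat)) (qfS \<alpha> K D L) (afS \<alpha> K D L) \<and>
         JPLT_II_rate K D L 1 (return_pmf (0::nat)) (qfS \<alpha> K D L) (afS \<alpha> K D L) = ennreal (real L / real (K - D + L))"
proof -
  let ?\<Omega> = "omega_II K D L 1 (return_pmf (0::nat)) :: (nat set \<times> (nat \<Rightarrow> nat \<Rightarrow> 'a) \<times> nat \<times> (nat \<Rightarrow> nat \<Rightarrow> 'a)) pmf"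
  have sO: "set_pmf ?\<Omega> = {(W,V,R,X). W \<in> supports K D \<and> V \<in> V_II L D \<and> R \<in> set_pmf (return_pmf (0::nat)) \<and> X \<in> mats K 1}"
    by (rule set_omega[OF L1(2,3)])
  have rec: "cond_entropy_pmf (map_pmf (\<lambda>(W, V, R, X).
           (demand L D 1 W V X, afS \<alpha> K D L (qfS \<alpha> K D L W V R) X, qfS \<alpha> K D L W V R, W, V)) ?\<Omega>) = 0"
  proof (rule cond_zero_of_det[where g="recS \<alpha> K D L"])
    fix z y assume zy: "(z, y) \<in> set_pmf (map_pmf (\<lambda>(W, V, R, X).
           (demand L D 1 W V X, afS \<alpha> K D L (qfS \<alpha> K D L W V R) X, qfS \<alpha> K D L W V R, W, V)) ?\<Omega>)"
    then obtain W V R X where m: "(W,V,R,X) \<in> set_pmf ?\<Omega>"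
      and e: "(z, y) = (demand L D 1 W V X, afS \<alpha> K D L (qfS \<alpha> K D L W V R) X, qfS \<alpha> K D L W V R, W, V)"
      by auto
    have W: "W \<in> supports K D" and X: "X \<in> mats K 1" using m sO by auto
    show "z = recS \<alpha> K D L y" using e recover[OF a L1 W X, of V R] by simp
  qed
  have prot: "JPLT_II_protocol K D L 1 (return_pmf (0::nat)) (qfS \<alpha> K D L) (afS \<alpha> K D L)"
    unfolding JPLT_II_protocol_def Let_def
  proof (intro conjI allI impI ballI)
    show "cond_entropy_pmf (map_pmf (\<lambda>(W, V, R, X).
           (demand L D 1 W V X, afS \<alpha> K D L (qfS \<alpha> K D L W V R) X, qfS \<alpha> K D L W V R, W, V)) ?\<Omega>) = 0"
      by (rule rec)
  next
    fix q W' assume pos: "0 < measure_pmf.prob ?\<Omega> {(W, V, R, X). qfS \<alpha> K D L W V R = q}" and W': "W' \<in> supports K D"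
    show "measure_pmf.prob ?\<Omega> {(W, V, R, X). W = W' \<and> qfS \<alpha> K D L W V R = q}
           / measure_pmf.prob ?\<Omega> {(W, V, R, X). qfS \<alpha> K D L W V R = q} = 1 / real (K choose D)"
      by (rule privacy_scheme[OF a L1 pos W'])
  qed
  let ?s = "K - D + L"
  let ?A = "map_pmf (\<lambda>(W,V,R,X). afS \<alpha> K D L (qfS \<alpha> K D L W V R) X) ?\<Omega>"
  have q2: "2 \<le> real CARD('a)" using card_field_ge2[where 'a='a] by simp
  have lo: "ennreal (real (?s * 1) * log 2 (real CARD('a))) \<le> entropy_pmf ?A"
    by (rule converse_entropy[OF L1 prot])
  define T where "T = to_nat_on (mats ?s 1) ` (mats ?s 1 :: (nat \<Rightarrow> nat \<Rightarrow> 'a) set)"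
  have finM: "finite (mats ?s 1 :: (nat \<Rightarrow> nat \<Rightarrow> 'a) set)" using card_mats[of ?s 1, where 'a='a] by simp
  have finT: "finite T" unfolding T_def using finM by simp
  have sA: "set_pmf ?A \<subseteq> T"
  proof
    fix b assume "b \<in> set_pmf ?A"
    then obtain W V R X where "b = afS \<alpha> K D L (qfS \<alpha> K D L W V R) X" by auto
    then show "b \<in> T" unfolding T_def afS_def using Amat_mats[OF L1(3)] by blast
  qed
  have cT: "card T \<le> CARD('a) ^ ?s" unfolding T_def
    using card_image_le[OF finM, of "to_nat_on (mats ?s 1)"] card_mats[of ?s 1, where 'a='a] by simp
  have Tne: "T \<noteq> {}" using sA set_pmf_not_empty[of ?A] by blast
  have cTp: "0 < real (card T)" using finT Tne by (simp add: card_gt_0_iff)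
  have "entropy_pmf ?A \<le> ennreal (log 2 (real (card T)))" by (rule entropy_upper[OF finT sA])
  also have "log 2 (real (card T)) \<le> log 2 (real (CARD('a) ^ ?s))"
    using cTp cT q2 by (subst log_le_cancel_iff) simp_all
  also have "log 2 (real (CARD('a) ^ ?s)) = real ?s * log 2 (real CARD('a))"
    using q2 by (simp add: log_nat_power)
  finally have up: "entropy_pmf ?A \<le> ennreal (real ?s * log 2 (real CARD('a)))" by (simp add: ennreal_leI)
  have H: "entropy_pmf ?A = ennreal (real ?s * log 2 (real CARD('a)))" using lo up by simp
  have lq: "0 < log 2 (real CARD('a))" using q2 by simp
  have sp: "0 < real ?s" using L1 by simp
  have "JPLT_II_rate K D L 1 (return_pmf (0::nat)) (qfS \<alpha> K D L) (afS \<alpha> K D L)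
      = ennreal (real L * (real 1 * log 2 (real CARD('a)))) / ennreal (real ?s * log 2 (real CARD('a)))"
    unfolding JPLT_II_rate_def H ..
  also have "\<dots> = ennreal (real L * (real 1 * log 2 (real CARD('a))) / (real ?s * log 2 (real CARD('a))))"
    using lq sp by (intro divide_ennreal) simp_all
  also have "real L * (real 1 * log 2 (real CARD('a))) / (real ?s * log 2 (real CARD('a))) = real L / real ?s"
  proof -
    have y: "log 2 (real CARD('a)) \<noteq> 0" using lq by linarith
    show ?thesis using nonzero_mult_divide_mult_cancel_right[OF y, of "real L" "real ?s"] by simp
  qed
  finally show ?thesis using prot by simp
qed


theorem theorem2:
  fixes K D L :: nat
  assumes "1 \<le> L" and "L \<le> D" and "D \<le> K"
  shows "(\<forall>N \<ge> 1. \<forall>(\<rho> :: 'r pmf)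
            (qf :: nat set \<Rightarrow> (nat \<Rightarrow> nat \<Rightarrow> 'a::{finite,field}) \<Rightarrow> 'r \<Rightarrow> 'q)
            (af :: 'q \<Rightarrow> (nat \<Rightarrow> nat \<Rightarrow> 'a) \<Rightarrow> 'b).
            JPLT_II_protocol K D L N \<rho> qf af \<longrightarrow>
            JPLT_II_rate K D L N \<rho> qf af \<le> ennreal (real L / real (K - D + L)))
       \<and> (CARD('a) \<ge> K \<longrightarrow>
          (\<exists>N \<ge> 1. \<exists>(\<rho> :: nat pmf)
            (qf :: nat set \<Rightarrow> (nat \<Rightarrow> nat \<Rightarrow> 'a) \<Rightarrow> nat \<Rightarrow> nat)
            (af :: nat \<Rightarrow> (nat \<Rightarrow> nat \<Rightarrow> 'a) \<Rightarrow> nat).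
            JPLT_II_protocol K D L N \<rho> qf af \<and>
            JPLT_II_rate K D L N \<rho> qf af = ennreal (real L / real (K - D + L))))"
proof (intro conjI allI impI)
  fix N :: nat and \<rho> :: "'r pmf"
    and qf :: "nat set \<Rightarrow> (nat \<Rightarrow> nat \<Rightarrow> 'a::{finite,field}) \<Rightarrow> 'r \<Rightarrow> 'q"
    and af :: "'q \<Rightarrow> (nat \<Rightarrow> nat \<Rightarrow> 'a) \<Rightarrow> 'b"
  assume N: "1 \<le> N" and p: "JPLT_II_protocol K D L N \<rho> qf af"
  show "JPLT_II_rate K D L N \<rho> qf af \<le> ennreal (real L / real (K - D + L))"
    by (rule converse_rate[OF assms N p])
next
  assume cK: "K \<le> CARD('a)"
  obtain S :: "'a set" where S: "card S = K"
    using obtain_subset_with_card_n[of K "UNIV :: 'a set"] cK by auto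
  have fS: "finite S" by simp
  obtain \<alpha> where "bij_betw \<alpha> {0..<card S} S" using ex_bij_betw_nat_finite[OF fS] by blast
  then have a: "inj_on \<alpha> {0..<K}" using S unfolding bij_betw_def by simp
  have ach: "JPLT_II_protocol K D L 1 (return_pmf (0::nat)) (qfS \<alpha> K D L) (afS \<alpha> K D L) \<and>
         JPLT_II_rate K D L 1 (return_pmf (0::nat)) (qfS \<alpha> K D L) (afS \<alpha> K D L) = ennreal (real L / real (K - D + L))"
    by (rule achievability[OF a assms])
  show "\<exists>N \<ge> 1. \<exists>(\<rho> :: nat pmf)
            (qf :: nat set \<Rightarrow> (nat \<Rightarrow> nat \<Rightarrow> 'a) \<Rightarrow> nat \<Rightarrow> nat)
            (af :: nat \<Rightarrow> (nat \<Rightarrow> nat \<Rightarrow> 'a) \<Rightarrow> nat).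
            JPLT_II_protocol K D L N \<rho> qf af \<and>
            JPLT_II_rate K D L N \<rho> qf af = ennreal (real L / real (K - D + L))"
    using ach by blast
qed

end
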